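(* Let $\alpha_1,\alpha_2\in\mathbb{R}\setminus\{0\}$, $r=\alpha_2/\alpha_1$. For every $b\in\mathbb{R}$, there is no constant $C$ such that $$\|\partial_x(w_1w_2)\|_{X^{\alpha_1}_{s,b-1}}\le C\|w_1\|_{X^{\alpha_1}_{s,b}}\|w_2\|_{X^{\alpha_2}_{s,b}}$$ holds for all $w_1\in X^{\alpha_1}_{s,b}$, $w_2\in X^{\alpha_2}_{s,b}$ with $\hat w_2(0,\cdot)=0$, in each of the situations: (a) $r<\frac14$ and $s<-\frac12$; (b) $r=1$ and $s<-\frac12$, even when additionally $\hat w_1(0,\cdot)=0$ is imposed; (c) $r=1$ and any $s\in\mathbb{R}$ (without the restriction $\hat w_1(0,\cdot)=0$); (d) $r\in[\frac14,\infty)\setminus\{1\}$ and $s<s_r$. Moreover, (e) for any $r\ne0$ and any $s\in\mathbb{R}$, there is no such $C$ if the restriction $\hat w_2(0,\cdot)=0$ is dropped.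
   Context: On $\mathbb{T}=\mathbb{R}/(2\pi\mathbb{Z})$: $\hat w(k,\tau)=\int_\mathbb{R}\int_0^{2\pi}e^{-i(\tau t+kx)}w(x,t)\,dx\,dt$, $k\in\mathbb{Z}$; $\langle\cdot\rangle=1+|\cdot|$; $X^{\alpha}_{s,b}$ is the completion of Schwartz functions under $\|w\|=\|\langle k\rangle^s\langle\tau-\alpha k^3\rangle^b\hat w(k,\tau)\|_{L^2(\mathbb{Z}\times\mathbb{R})}$. Irrationality exponent $\mu(\rho)=\sup\{\mu:0<|\rho-m/n|<|n|^{-\mu}$ for infinitely many $(m,n)\in\mathbb{Z}\times(\mathbb{Z}\setminus\{0\})\}$; for $r\ge\frac14$, $\sigma_r=\mu(\sqrt{12r-3})$, $s_r=1$ if $\sigma_r=1$ or $\sigma_r\ge3$, $s_r=(\sigma_r-1)/2$ if $2\le\sigma_r<3$. *)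

theory Defs
  imports "HOL-Analysis.Analysis"
begin

text \<open>Functions on T x R are represented as w :: real => real => complex, w x t,
  2 pi-periodic in x.\<close>

definition pdx :: "(real \<Rightarrow> real \<Rightarrow> complex) \<Rightarrow> real \<Rightarrow> real \<Rightarrow> complex" where
  "pdx f = (\<lambda>x t. vector_derivative (\<lambda>y. f y t) (at x))"

definition pdt :: "(real \<Rightarrow> real \<Rightarrow> complex) \<Rightarrow> real \<Rightarrow> real \<Rightarrow> complex" where
  "pdt f = (\<lambda>x t. vector_derivative (\<lambda>s. f x s) (at t))"

text \<open>Iterated partial derivative: True = d/dx, False = d/dt (innermost last in list).\<close>
fun pd :: "bool list \<Rightarrow> (real \<Rightarrow> real \<Rightarrow> complex) \<Rightarrow> real \<Rightarrow> real \<Rightarrow> complex" where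
  "pd [] f = f"
| "pd (True # ds) f = pdx (pd ds f)"
| "pd (False # ds) f = pdt (pd ds f)"

definition smooth2 :: "(real \<Rightarrow> real \<Rightarrow> complex) \<Rightarrow> bool" where
  "smooth2 f \<longleftrightarrow>
     (\<forall>ds x t. (\<lambda>y. pd ds f y t) differentiable (at x) \<and> (\<lambda>s. pd ds f x s) differentiable (at t)) \<and>
     (\<forall>ds. continuous_on UNIV (\<lambda>(x, t). pd ds f x t))"

definition schwartz_TR :: "(real \<Rightarrow> real \<Rightarrow> complex) \<Rightarrow> bool" where
  "schwartz_TR f \<longleftrightarrow> smooth2 f \<and> (\<forall>x t. f (x + 2 * pi) t = f x t) \<and>
     (\<forall>ds (n::nat). \<exists>M. \<forall>x t. \<bar>t\<bar> ^ n * cmod (pd ds f x t) \<le> M)"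

definition fourier_TR :: "(real \<Rightarrow> real \<Rightarrow> complex) \<Rightarrow> int \<Rightarrow> real \<Rightarrow> complex" where
  "fourier_TR w k \<tau> =
     (LINT t|lborel. (LINT x:{0..2*pi}|lborel. cis (- (\<tau> * t + of_int k * x)) * w x t))"

definition Xnorm :: "real \<Rightarrow> real \<Rightarrow> real \<Rightarrow> (real \<Rightarrow> real \<Rightarrow> complex) \<Rightarrow> real" where
  "Xnorm \<alpha> s b w = sqrt (enn2real
     (\<integral>\<^sup>+ k. (\<integral>\<^sup>+ \<tau>. ennreal ((1 + \<bar>real_of_int k\<bar>) powr (2 * s)
          * (1 + \<bar>\<tau> - \<alpha> * (real_of_int k) ^ 3\<bar>) powr (2 * b)
          * (cmod (fourier_TR w k \<tau>))\<^sup>2) \<partial>lborel) \<partial>(count_space (UNIV :: int set))))"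

definition dx_prod :: "(real \<Rightarrow> real \<Rightarrow> complex) \<Rightarrow> (real \<Rightarrow> real \<Rightarrow> complex) \<Rightarrow> real \<Rightarrow> real \<Rightarrow> complex" where
  "dx_prod w1 w2 = pdx (\<lambda>x t. w1 x t * w2 x t)"

definition zero_mode :: "(real \<Rightarrow> real \<Rightarrow> complex) \<Rightarrow> bool" where
  "zero_mode w \<longleftrightarrow> (\<forall>\<tau>. fourier_TR w 0 \<tau> = 0)"

definition bilin_est :: "real \<Rightarrow> real \<Rightarrow> real \<Rightarrow> real \<Rightarrow> real \<Rightarrow> (real \<Rightarrow> real \<Rightarrow> complex) \<Rightarrow> (real \<Rightarrow> real \<Rightarrow> complex) \<Rightarrow> bool" where
  "bilin_est \<alpha>1 \<alpha>2 s b C w1 w2 \<longleftrightarrow>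
     Xnorm \<alpha>1 s (b - 1) (dx_prod w1 w2) \<le> C * Xnorm \<alpha>1 s b w1 * Xnorm \<alpha>2 s b w2"

definition irr_exp :: "real \<Rightarrow> ereal" where
  "irr_exp \<rho> = Sup {ereal \<mu> | \<mu>. infinite {(m :: int, n :: int). n \<noteq> 0 \<and>
      0 < \<bar>\<rho> - real_of_int m / real_of_int n\<bar> \<and>
      \<bar>\<rho> - real_of_int m / real_of_int n\<bar> < \<bar>real_of_int n\<bar> powr (- \<mu>)}}"

definition sigma_r :: "real \<Rightarrow> ereal" where
  "sigma_r r = irr_exp (sqrt (12 * r - 3))"

text \<open>s_r (for r >= 1/4 one has sigma_r = 1 or sigma_r >= 2, so the cases are exhaustive).\<close>
definition s_r :: "real \<Rightarrow> real" where
  "s_r r = (if 2 \<le> sigma_r r \<and> sigma_r r < 3 then (real_of_ereal (sigma_r r) - 1) / 2 else 1)"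

end

theory Submission
  imports Defs "HOL-Probability.Characteristic_Functions" "HOL-Computational_Algebra.Polynomial"
begin

lemma gauss_std:
  "(LINT x|lborel. cis (w * x) * complex_of_real (exp (- (x^2) / 2))) = complex_of_real (sqrt (2*pi) * exp (- (w^2) / 2))"
proof -
  have "char std_normal_distribution w = complex_of_real (exp (- (w^2) / 2))"
    by (simp add: char_std_normal_distribution)
  moreover have "char std_normal_distribution w = (LINT x|lborel. std_normal_density x *\<^sub>R iexp (w * x))"
    unfolding char_def by (subst integral_density) auto
  moreover have "\<And>x. std_normal_density x *\<^sub>R iexp (w * x) = complex_of_real (1 / sqrt (2*pi)) * (cis (w * x) * complex_of_real (exp (- (x^2) / 2)))"
    by (simp add: std_normal_density_def cis_conv_exp scaleR_conv_of_real mult.commute mult.left_commute)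
  ultimately have "(LINT x|lborel. complex_of_real (1 / sqrt (2*pi)) * (cis (w * x) * complex_of_real (exp (- (x^2) / 2)))) = complex_of_real (exp (- (w^2) / 2))"
    by simp
  then have "complex_of_real (1 / sqrt (2*pi)) * (LINT x|lborel. cis (w * x) * complex_of_real (exp (- (x^2) / 2))) = complex_of_real (exp (- (w^2) / 2))"
    by simp
  then show ?thesis
    by (simp add: field_simps)
qed

lemma gauss_gen:
  assumes a: "0 < a"
  shows "(LINT t|lborel. cis (w * t) * complex_of_real (exp (- a * t^2))) = complex_of_real (sqrt (pi / a) * exp (- (w^2) / (4*a)))"
proof -
  define c where "c = 1 / sqrt (2 * a)"
  have c0: "c > 0" using a by (simp add: c_def)
  have cc: "c^2 = 1 / (2*a)" using a by (simp add: c_def power_divide)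
  have "(LINT t|lborel. cis (w * t) * complex_of_real (exp (- a * t^2))) =
        \<bar>c\<bar> *\<^sub>R (LINT x|lborel. cis (w * (0 + c * x)) * complex_of_real (exp (- a * (0 + c * x)^2)))"
    by (rule lborel_integral_real_affine) (use c0 in auto)
  also have "(\<lambda>x. cis (w * (0 + c * x)) * complex_of_real (exp (- a * (0 + c * x)^2))) = (\<lambda>x. cis ((w*c) * x) * complex_of_real (exp (- (x^2) / 2)))"
  proof
    fix x
    have "- a * (0 + c * x)^2 = - (x^2)/2" using a cc by (simp add: power_mult_distrib field_simps)
    then show "cis (w * (0 + c * x)) * complex_of_real (exp (- a * (0 + c * x)^2)) = cis ((w*c) * x) * complex_of_real (exp (- (x^2) / 2))"
      by (simp add: mult.assoc)
  qed
  also have "\<bar>c\<bar> *\<^sub>R (LINT x|lborel. cis ((w*c) * x) * complex_of_real (exp (- (x^2) / 2))) = complex_of_real (c * (sqrt (2*pi) * exp (- ((w*c)^2) / 2)))"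
    using c0 gauss_std[of "w*c"] by (simp add: scaleR_conv_of_real)
  also have "c * (sqrt (2*pi) * exp (- ((w*c)^2) / 2)) = sqrt (pi / a) * exp (- (w^2) / (4*a))"
  proof -
    have "c * sqrt (2*pi) = sqrt (pi / a)" using a by (simp add: c_def real_sqrt_divide real_sqrt_mult field_simps)
    moreover have "- ((w*c)^2) / 2 = - (w^2) / (4*a)" using a cc by (simp add: power_mult_distrib field_simps)
    ultimately show ?thesis by (metis mult.assoc)
  qed
  finally show ?thesis .
qed

lemma hvd_cis:
  "((\<lambda>x. cis (u * x + v)) has_vector_derivative (\<i> * complex_of_real u * cis (u*x+v))) (at x within S)"
proof -
  have d: "((\<lambda>x. u * x + v) has_derivative (\<lambda>t. u * t)) (at x within S)"
    by (auto intro!: derivative_eq_intros)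
  show ?thesis
    unfolding has_vector_derivative_def
    by (rule has_derivative_eq_rhs[OF has_derivative_cis[OF d]])
       (auto simp: scaleR_conv_of_real fun_eq_iff)
qed

lemma cis_int_integral:
  "(LINT x:{0..2*pi}|lborel. cis (of_int j * x)) = (if j = 0 then complex_of_real (2*pi) else 0)"
proof (cases "j = 0")
  case True
  then show ?thesis by (simp add: set_integral_const scaleR_conv_of_real)
next
  case False
  define F where "F = (\<lambda>x. (- \<i> / of_int j) * cis (of_int j * x + 0))"
  have "(LINT x:{0..2*pi}|lborel. cis (of_int j * x)) = (LBINT x=ereal 0..ereal (2*pi). cis (of_int j * x))"
    by (rule sym, rule interval_integral_Icc) simp
  also have "\<dots> = F (2*pi) - F 0"
  proof (rule interval_integral_FTC_finite)
    show "continuous_on {min 0 (2 * pi)..max 0 (2 * pi)} (\<lambda>x. cis (of_int j * x))"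
      by (intro continuous_intros)
    fix x :: real
    have "(F has_vector_derivative ((- \<i> / of_int j) * (\<i> * complex_of_real (of_int j) * cis (of_int j * x + 0)))) (at x within {min 0 (2 * pi)..max 0 (2 * pi)})"
      unfolding F_def by (intro has_vector_derivative_mult_right hvd_cis)
    moreover have "(- \<i> / of_int j) * (\<i> * complex_of_real (of_int j) * cis (of_int j * x + 0)) = cis (of_int j * x)"
      using False by (simp add: field_simps)
    ultimately show "(F has_vector_derivative cis (of_int j * x)) (at x within {min 0 (2 * pi)..max 0 (2 * pi)})"
      by simp
  qed
  also have "\<dots> = 0"
  proof -
    have "cis (of_int j * (2*pi)) = 1"
      using cis_multiple_2pi[of "of_int j"] by (simp add: mult.commute)
    then show ?thesis by (simp add: F_def)
  qed
  finally show ?thesis using False by simp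
qed

definition wave :: "complex \<Rightarrow> int \<Rightarrow> real \<Rightarrow> real \<Rightarrow> real \<Rightarrow> real \<Rightarrow> complex" where
  "wave A k c a = (\<lambda>x t. A * cis (of_int k * x + c * t) * complex_of_real (exp (- a * t^2)))"

lemma fourier_wave:
  assumes a: "0 < a"
  shows "fourier_TR (wave A k c a) k' \<tau> =
    (if k' = k then A * complex_of_real (2 * pi * sqrt (pi / a) * exp (- ((c-\<tau>)^2) / (4*a))) else 0)"
proof -
  have inner: "(LINT x:{0..2*pi}|lborel. cis (- (\<tau> * t + of_int k' * x)) * wave A k c a x t)
     = (A * cis ((c - \<tau>) * t) * complex_of_real (exp (- a * t^2))) * (if k - k' = 0 then complex_of_real (2*pi) else 0)" for t
  proof -
    have "\<And>x. cis (- (\<tau> * t + of_int k' * x)) * wave A k c a x t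
        = (A * cis ((c - \<tau>) * t) * complex_of_real (exp (- a * t^2))) * cis (of_int (k - k') * x)"
    proof -
      fix x
      have "cis (- (\<tau> * t + of_int k' * x)) * cis (of_int k * x + c * t) = cis ((c - \<tau>) * t) * cis (of_int (k - k') * x)"
        by (simp add: cis_mult algebra_simps)
      then show "cis (- (\<tau> * t + of_int k' * x)) * wave A k c a x t
        = (A * cis ((c - \<tau>) * t) * complex_of_real (exp (- a * t^2))) * cis (of_int (k - k') * x)"
        unfolding wave_def by (simp only: mult.assoc[symmetric]) (simp add: mult.commute mult.left_commute)
    qed
    then have "(LINT x:{0..2*pi}|lborel. cis (- (\<tau> * t + of_int k' * x)) * wave A k c a x t)
       = (LINT x:{0..2*pi}|lborel. (A * cis ((c - \<tau>) * t) * complex_of_real (exp (- a * t^2))) * cis (of_int (k - k') * x))"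
      by simp
    also have "\<dots> = (A * cis ((c - \<tau>) * t) * complex_of_real (exp (- a * t^2))) * (LINT x:{0..2*pi}|lborel. cis (of_int (k - k') * x))"
      by (rule set_integral_mult_right)
    finally show ?thesis by (simp only: cis_int_integral)
  qed
  show ?thesis
  proof (cases "k' = k")
    case True
    have "fourier_TR (wave A k c a) k' \<tau> = (LINT t|lborel. (2*pi*A) * (cis ((c - \<tau>) * t) * complex_of_real (exp (- a * t^2))))"
    proof -
      have "\<And>t. (A * cis ((c - \<tau>) * t) * complex_of_real (exp (- a * t^2))) * (if k - k' = 0 then complex_of_real (2*pi) else 0)
         = (2*pi*A) * (cis ((c - \<tau>) * t) * complex_of_real (exp (- a * t^2)))"
        using True by simp
      then show ?thesis unfolding fourier_TR_def inner by presburger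
    qed
    also have "\<dots> = (2*pi*A) * complex_of_real (sqrt (pi / a) * exp (- ((c-\<tau>)^2) / (4*a)))"
      by (simp only: integral_mult_right_zero gauss_gen[OF a])
    finally show ?thesis using True by simp
  next
    case False
    then show ?thesis unfolding fourier_TR_def inner by simp
  qed
qed

definition gw :: "int \<Rightarrow> real \<Rightarrow> real \<Rightarrow> complex poly \<Rightarrow> real \<Rightarrow> real \<Rightarrow> complex" where
  "gw k c a P = (\<lambda>x t. cis (of_int k * x + c * t) * poly P (complex_of_real t) * complex_of_real (exp (- a * t^2)))"

lemma hvd_polyr:
  "((\<lambda>s. poly P (complex_of_real s)) has_vector_derivative poly (pderiv P) (complex_of_real s)) (at s)"
proof -
  have f: "(complex_of_real has_vector_derivative 1) (at s)"
    using has_vector_derivative_of_real[of "\<lambda>x. x" 1 "at s"] by simp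
  have "((poly P \<circ> complex_of_real) has_vector_derivative (1 * poly (pderiv P) (complex_of_real s))) (at s)"
    by (rule field_vector_diff_chain_at[OF f]) simp
  then show ?thesis by (simp add: o_def)
qed

lemma hvd_gauss:
  "((\<lambda>s. complex_of_real (exp (- a * s^2))) has_vector_derivative complex_of_real (exp (- a * s^2) * (- 2 * a * s))) (at s)"
  by (rule has_vector_derivative_of_real) (auto intro!: derivative_eq_intros)

lemma hvd_gw_x:
  "((\<lambda>y. gw k c a P y t) has_vector_derivative gw k c a (smult (\<i> * of_int k) P) x t) (at x)"
proof -
  have "((\<lambda>y. cis (of_int k * y + c * t)) has_vector_derivative (\<i> * complex_of_real (of_int k) * cis (of_int k * x + c * t))) (at x)"
    by (rule hvd_cis)
  then have "((\<lambda>y. cis (of_int k * y + c * t) * (poly P (complex_of_real t) * complex_of_real (exp (- a * t^2))))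
     has_vector_derivative (\<i> * complex_of_real (of_int k) * cis (of_int k * x + c * t)) * (poly P (complex_of_real t) * complex_of_real (exp (- a * t^2)))) (at x)"
    by (rule has_vector_derivative_mult_left)
  then show ?thesis unfolding gw_def by (simp add: mult_ac)
qed

definition dtP :: "real \<Rightarrow> real \<Rightarrow> complex poly \<Rightarrow> complex poly" where
  "dtP c a P = smult (\<i> * complex_of_real c) P + pderiv P - smult (complex_of_real (2 * a)) (pCons 0 P)"

lemma hvd_gw_t:
  "((\<lambda>s. gw k c a P x s) has_vector_derivative gw k c a (dtP c a P) x t) (at t)"
proof -
  have c1: "((\<lambda>s. cis (c * s + of_int k * x)) has_vector_derivative (\<i> * complex_of_real c * cis (c * t + of_int k * x))) (at t)"
    by (rule hvd_cis)
  have "((\<lambda>s. cis (c * s + of_int k * x) * poly P (complex_of_real s) * complex_of_real (exp (- a * s^2))) has_vector_derivative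
     (cis (c * t + of_int k * x) * poly P (complex_of_real t) * complex_of_real (exp (- a * t^2) * (- 2 * a * t))
      + (cis (c * t + of_int k * x) * poly (pderiv P) (complex_of_real t) + (\<i> * complex_of_real c * cis (c * t + of_int k * x)) * poly P (complex_of_real t)) * complex_of_real (exp (- a * t^2)))) (at t)"
    by (intro has_vector_derivative_mult c1 hvd_polyr hvd_gauss)
  moreover have "cis (c * t + of_int k * x) * poly P (complex_of_real t) * complex_of_real (exp (- a * t^2) * (- 2 * a * t))
      + (cis (c * t + of_int k * x) * poly (pderiv P) (complex_of_real t) + (\<i> * complex_of_real c * cis (c * t + of_int k * x)) * poly P (complex_of_real t)) * complex_of_real (exp (- a * t^2))
      = gw k c a (dtP c a P) x t"
    unfolding gw_def dtP_def by (simp add: algebra_simps add.commute)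
  ultimately show ?thesis unfolding gw_def by (simp add: add.commute)
qed

lemma pdx_gw: "pdx (gw k c a P) = gw k c a (smult (\<i> * of_int k) P)"
  unfolding pdx_def by (intro ext vector_derivative_at hvd_gw_x)

lemma pdt_gw: "pdt (gw k c a P) = gw k c a (dtP c a P)"
  unfolding pdt_def by (intro ext vector_derivative_at hvd_gw_t)

lemma pd_gw: "\<exists>Q. pd ds (gw k c a P) = gw k c a Q"
proof (induction ds)
  case Nil
  then show ?case by auto
next
  case (Cons d ds)
  then obtain Q where Q: "pd ds (gw k c a P) = gw k c a Q" by blast
  show ?case
  proof (cases d)
    case True
    then show ?thesis using Q pdx_gw by auto
  next
    case False
    then show ?thesis using Q pdt_gw by auto
  qed
qed

lemma poly_growth: "\<exists>C N. \<forall>t::real. cmod (poly P (complex_of_real t)) \<le> C * (1 + \<bar>t\<bar>)^N"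
proof (induction P)
  case 0
  show ?case by (rule exI[of _ "0::real"]) simp
next
  case (pCons a p)
  then obtain C N where CN: "\<And>t::real. cmod (poly p (complex_of_real t)) \<le> C * (1 + \<bar>t\<bar>)^N" by blast
  have C0: "C \<ge> 0" using CN[of 0] by (simp del: of_real_0) (meson norm_ge_zero order_trans)
  show ?case
  proof (intro exI allI)
    fix t :: real
    have "cmod (poly (pCons a p) (complex_of_real t)) \<le> cmod a + \<bar>t\<bar> * cmod (poly p (complex_of_real t))"
      by (simp add: norm_mult norm_triangle_le)
    also have "\<dots> \<le> cmod a * (1 + \<bar>t\<bar>)^(Suc N) + (1 + \<bar>t\<bar>) * (C * (1 + \<bar>t\<bar>)^N)"
    proof (rule add_mono)
      have "1 \<le> (1 + \<bar>t\<bar>)^(Suc N)" by (rule one_le_power) simp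
      then show "cmod a \<le> cmod a * (1 + \<bar>t\<bar>)^(Suc N)"
        by (simp add: mult_le_cancel_left1)
      show "\<bar>t\<bar> * cmod (poly p (complex_of_real t)) \<le> (1 + \<bar>t\<bar>) * (C * (1 + \<bar>t\<bar>)^N)"
        by (rule mult_mono) (use CN[of t] in auto)
    qed
    also have "\<dots> = (cmod a + C) * (1 + \<bar>t\<bar>)^(Suc N)" by (simp add: algebra_simps)
    finally show "cmod (poly (pCons a p) (complex_of_real t)) \<le> (cmod a + C) * (1 + \<bar>t\<bar>)^(Suc N)" .
  qed
qed

lemma exp_poly_bound:
  assumes a: "0 < a"
  shows "(1 + \<bar>t\<bar>)^m * exp (- a * t^2) \<le> exp (real m ^ 2 / (4 * a))"
proof -
  have "(1 + \<bar>t\<bar>)^m \<le> (exp \<bar>t\<bar>)^m"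
    by (rule power_mono) auto
  also have "\<dots> = exp (real m * \<bar>t\<bar>)" by (simp add: exp_of_nat_mult)
  finally have "(1 + \<bar>t\<bar>)^m * exp (- a * t^2) \<le> exp (real m * \<bar>t\<bar>) * exp (- a * t^2)"
    by (simp add: mult_right_mono)
  also have "\<dots> = exp (real m * \<bar>t\<bar> - a * t^2)" by (simp add: exp_add[symmetric])
  also have "\<dots> \<le> exp (real m ^ 2 / (4 * a))"
  proof -
    have "0 \<le> (real m - 2 * a * \<bar>t\<bar>)^2" by simp
    then have "4 * a * (real m * \<bar>t\<bar> - a * t^2) \<le> real m ^ 2"
      by (simp add: power2_eq_square algebra_simps)
    then have "real m * \<bar>t\<bar> - a * t^2 \<le> real m ^ 2 / (4 * a)"
      using a by (simp add: field_simps mult.commute)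
    then show ?thesis by simp
  qed
  finally show ?thesis .
qed

lemma gw_decay:
  assumes a: "0 < a"
  shows "\<exists>M. \<forall>x t. \<bar>t\<bar> ^ n * cmod (gw k c a P x t) \<le> M"
proof -
  obtain C N where CN: "\<And>t::real. cmod (poly P (complex_of_real t)) \<le> C * (1 + \<bar>t\<bar>)^N"
    using poly_growth by blast
  have C0: "C \<ge> 0" using CN[of 0] by (simp del: of_real_0) (meson norm_ge_zero order_trans)
  show ?thesis
  proof (intro exI allI)
    fix x t :: real
    have "\<bar>t\<bar> ^ n * cmod (gw k c a P x t) = \<bar>t\<bar> ^ n * (cmod (poly P (complex_of_real t)) * exp (- a * t^2))"
      by (simp add: gw_def norm_mult)
    also have "\<dots> \<le> (1 + \<bar>t\<bar>) ^ n * ((C * (1 + \<bar>t\<bar>)^N) * exp (- a * t^2))"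
      by (intro mult_mono power_mono) (use CN[of t] C0 in auto)
    also have "\<dots> = C * ((1 + \<bar>t\<bar>) ^ (n + N) * exp (- a * t^2))"
      by (simp add: power_add algebra_simps)
    also have "\<dots> \<le> C * exp (real (n + N) ^ 2 / (4 * a))"
      by (intro mult_left_mono exp_poly_bound a C0)
    finally show "\<bar>t\<bar> ^ n * cmod (gw k c a P x t) \<le> C * exp (real (n + N) ^ 2 / (4 * a))" .
  qed
qed

lemma gw_periodic: "gw k c a P (x + 2 * pi) t = gw k c a P x t"
proof -
  have "cis (of_int k * (x + 2 * pi) + c * t) = cis (of_int k * x + c * t) * cis (2 * pi * of_int k)"
    by (simp add: cis_mult algebra_simps)
  also have "\<dots> = cis (of_int k * x + c * t)"
    using cis_multiple_2pi[of "of_int k"] by simp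
  finally show ?thesis unfolding gw_def by simp
qed

lemma gw_cont: "continuous_on UNIV (\<lambda>(x, t). gw k c a P x t)"
  unfolding gw_def split_def by (intro continuous_intros)

lemma schwartz_gw:
  assumes a: "0 < a"
  shows "schwartz_TR (gw k c a P)"
  unfolding schwartz_TR_def smooth2_def
proof (intro conjI allI)
  fix ds x t
  obtain Q where Q: "pd ds (gw k c a P) = gw k c a Q" using pd_gw by blast
  show "(\<lambda>y. pd ds (gw k c a P) y t) differentiable at x"
    unfolding Q by (rule differentiableI_vector[OF hvd_gw_x])
  show "(\<lambda>s. pd ds (gw k c a P) x s) differentiable at t"
    unfolding Q by (rule differentiableI_vector[OF hvd_gw_t])
next
  fix ds
  obtain Q where Q: "pd ds (gw k c a P) = gw k c a Q" using pd_gw by blast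
  show "continuous_on UNIV (\<lambda>(x, t). pd ds (gw k c a P) x t)"
    unfolding Q by (rule gw_cont)
next
  fix x t
  show "gw k c a P (x + 2 * pi) t = gw k c a P x t" by (rule gw_periodic)
next
  fix ds and n :: nat
  obtain Q where Q: "pd ds (gw k c a P) = gw k c a Q" using pd_gw by blast
  show "\<exists>M. \<forall>x t. \<bar>t\<bar> ^ n * cmod (pd ds (gw k c a P) x t) \<le> M"
    unfolding Q by (rule gw_decay[OF a])
qed

lemma wave_gw: "wave A k c a = gw k c a [:A:]"
  unfolding wave_def gw_def by (simp add: fun_eq_iff mult_ac)

lemma schwartz_wave: "0 < a \<Longrightarrow> schwartz_TR (wave A k c a)"
  by (simp add: wave_gw schwartz_gw)

lemma peetre_base: "1 + \<bar>x + y\<bar> \<le> (1 + \<bar>x\<bar>) * (1 + \<bar>y\<bar>)" for x y :: real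
proof -
  have "\<bar>x + y\<bar> \<le> \<bar>x\<bar> + \<bar>y\<bar>" by (rule abs_triangle_ineq)
  moreover have "0 \<le> \<bar>x\<bar> * \<bar>y\<bar>" by simp
  moreover have "(1 + \<bar>x\<bar>) * (1 + \<bar>y\<bar>) = 1 + \<bar>x\<bar> + \<bar>y\<bar> + \<bar>x\<bar> * \<bar>y\<bar>" by (simp add: algebra_simps)
  ultimately show ?thesis by linarith
qed

lemma peetre_upper: "(1 + \<bar>x + y\<bar>) powr p \<le> (1 + \<bar>x\<bar>) powr p * (1 + \<bar>y\<bar>) powr \<bar>p\<bar>" for x y p :: real
proof (cases "p \<ge> 0")
  case True
  have "(1 + \<bar>x + y\<bar>) powr p \<le> ((1 + \<bar>x\<bar>) * (1 + \<bar>y\<bar>)) powr p"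
    by (rule powr_mono2) (use True peetre_base in auto)
  also have "\<dots> = (1 + \<bar>x\<bar>) powr p * (1 + \<bar>y\<bar>) powr \<bar>p\<bar>"
    using True by (simp add: powr_mult)
  finally show ?thesis .
next
  case False
  have "1 + \<bar>x\<bar> \<le> (1 + \<bar>x + y\<bar>) * (1 + \<bar>- y\<bar>)"
    using peetre_base[of "x + y" "- y"] by simp
  then have h: "(1 + \<bar>x\<bar>) / (1 + \<bar>y\<bar>) \<le> 1 + \<bar>x + y\<bar>"
    by (simp add: divide_le_eq)
  have "(1 + \<bar>x + y\<bar>) powr p \<le> ((1 + \<bar>x\<bar>) / (1 + \<bar>y\<bar>)) powr p"
    by (rule powr_mono2') (use False h in auto)
  also have "\<dots> = (1 + \<bar>x\<bar>) powr p * (1 + \<bar>y\<bar>) powr \<bar>p\<bar>"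
  proof -
    have "((1 + \<bar>x\<bar>) / (1 + \<bar>y\<bar>)) powr p = (1 + \<bar>x\<bar>) powr p / (1 + \<bar>y\<bar>) powr p"
      by (rule powr_divide; simp)
    also have "\<dots> = (1 + \<bar>x\<bar>) powr p * (1 + \<bar>y\<bar>) powr (- p)"
      by (simp add: powr_minus divide_inverse)
    finally show ?thesis using False by simp
  qed
  finally show ?thesis .
qed

lemma peetre_lower: "(1 + \<bar>x\<bar>) powr p * (1 + \<bar>y\<bar>) powr (- \<bar>p\<bar>) \<le> (1 + \<bar>x + y\<bar>) powr p" for x y p :: real
proof -
  have "(1 + \<bar>x + y + - y\<bar>) powr p \<le> (1 + \<bar>x + y\<bar>) powr p * (1 + \<bar>- y\<bar>) powr \<bar>p\<bar>"
    by (rule peetre_upper)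
  then have "(1 + \<bar>x\<bar>) powr p \<le> (1 + \<bar>x + y\<bar>) powr p * (1 + \<bar>y\<bar>) powr \<bar>p\<bar>" by simp
  then show ?thesis
    by (simp add: powr_minus divide_inverse[symmetric] divide_le_eq)
qed

lemma exp_powr_bound:
  fixes a p t :: real
  assumes a: "0 < a" and p: "0 \<le> p"
  shows "(1 + \<bar>t\<bar>) powr p * exp (- a * t^2) \<le> exp (p ^ 2 / (4 * a))"
proof -
  have nz: "1 + \<bar>t\<bar> \<noteq> 0" using abs_ge_zero[of t] by linarith
  have "(1 + \<bar>t\<bar>) powr p = exp (p * ln (1 + \<bar>t\<bar>))" using nz by (simp add: powr_def)
  also have "\<dots> \<le> exp (p * \<bar>t\<bar>)"
    using p by (simp add: mult_left_mono ln_add_one_self_le_self)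
  finally have "(1 + \<bar>t\<bar>) powr p * exp (- a * t^2) \<le> exp (p * \<bar>t\<bar>) * exp (- a * t^2)"
    by (simp add: mult_right_mono)
  also have "\<dots> = exp (p * \<bar>t\<bar> - a * t^2)" by (simp add: exp_add[symmetric])
  also have "\<dots> \<le> exp (p ^ 2 / (4 * a))"
  proof -
    have "0 \<le> (p - 2 * a * \<bar>t\<bar>)^2" by simp
    then have "4 * a * (p * \<bar>t\<bar> - a * t^2) \<le> p ^ 2"
      by (simp add: power2_eq_square algebra_simps)
    then have "p * \<bar>t\<bar> - a * t^2 \<le> p ^ 2 / (4 * a)"
      using a by (simp add: field_simps mult.commute)
    then show ?thesis by simp
  qed
  finally show ?thesis .
qed

lemma nn_integral_gauss_shift:
  fixes q c :: real
  assumes q: "0 < q"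
  shows "(\<integral>\<^sup>+\<tau>. ennreal (exp (- ((\<tau> - c)^2) / q)) \<partial>lborel) = ennreal (sqrt (pi * q))"
proof -
  define sd where "sd = sqrt (q / 2)"
  have sd: "0 < sd" using q by (simp add: sd_def)
  have sd2: "2 * sd^2 = q" using q by (simp add: sd_def)
  have "(\<integral>\<^sup>+\<tau>. ennreal (normal_density c sd \<tau>) \<partial>lborel) = ennreal 1"
    by (subst nn_integral_eq_integral) (auto simp: integrable_normal_density[OF sd] integral_normal_density[OF sd])
  moreover have "\<And>\<tau>. exp (- ((\<tau> - c)^2) / q) = sqrt (2 * pi * sd^2) * normal_density c sd \<tau>"
    using sd sd2 by (simp add: normal_density_def)
  ultimately have "(\<integral>\<^sup>+\<tau>. ennreal (exp (- ((\<tau> - c)^2) / q)) \<partial>lborel) = ennreal (sqrt (2 * pi * sd^2)) * ennreal 1"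
    by (simp add: ennreal_mult nn_integral_cmult)
  also have "sqrt (2 * pi * sd^2) = sqrt (pi * q)" using sd2 by (simp add: mult.commute mult.left_commute)
  finally show ?thesis by simp
qed

definition Jint :: "real \<Rightarrow> real \<Rightarrow> real \<Rightarrow> real \<Rightarrow> ennreal" where
  "Jint q \<beta> e c = (\<integral>\<^sup>+\<tau>. ennreal ((1 + \<bar>\<tau> - e\<bar>) powr (2*\<beta>) * exp (- ((\<tau> - c)^2) / q)) \<partial>lborel)"

lemma J_upper:
  fixes q \<beta> :: real
  assumes q: "0 < q"
  shows "Jint q \<beta> e c \<le> ennreal (exp (2 * \<beta>^2 * q) * sqrt (pi * (2 * q)) * (1 + \<bar>c - e\<bar>) powr (2*\<beta>))"
proof -
  define E where "E = exp (2 * \<beta>^2 * q)"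
  have pt: "(1 + \<bar>\<tau> - e\<bar>) powr (2*\<beta>) * exp (- ((\<tau> - c)^2) / q)
      \<le> ((1 + \<bar>c - e\<bar>) powr (2*\<beta>) * E) * exp (- ((\<tau> - c)^2) / (2 * q))" for \<tau>
  proof -
    have a1: "(1 + \<bar>\<tau> - e\<bar>) powr (2*\<beta>) \<le> (1 + \<bar>c - e\<bar>) powr (2*\<beta>) * (1 + \<bar>\<tau> - c\<bar>) powr \<bar>2*\<beta>\<bar>"
      using peetre_upper[of "c - e" "\<tau> - c" "2*\<beta>"] by simp
    have a2: "(1 + \<bar>\<tau> - c\<bar>) powr \<bar>2*\<beta>\<bar> * exp (- (1 / (2*q)) * (\<tau> - c)^2) \<le> E"
    proof -
      have "(1 + \<bar>\<tau> - c\<bar>) powr \<bar>2*\<beta>\<bar> * exp (- (1 / (2*q)) * (\<tau> - c)^2) \<le> exp (\<bar>2*\<beta>\<bar> ^ 2 / (4 * (1 / (2*q))))"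
        by (rule exp_powr_bound) (use q in auto)
      also have "\<bar>2*\<beta>\<bar> ^ 2 / (4 * (1 / (2*q))) = 2 * \<beta>^2 * q"
        using q by (simp add: power2_eq_square field_simps abs_mult_self_eq)
      finally show ?thesis unfolding E_def .
    qed
    have split: "exp (- ((\<tau> - c)^2) / q) = exp (- (1 / (2*q)) * (\<tau> - c)^2) * exp (- ((\<tau> - c)^2) / (2 * q))"
      using q by (simp add: exp_add[symmetric] field_simps)
    have "(1 + \<bar>\<tau> - e\<bar>) powr (2*\<beta>) * exp (- ((\<tau> - c)^2) / q)
        \<le> ((1 + \<bar>c - e\<bar>) powr (2*\<beta>) * (1 + \<bar>\<tau> - c\<bar>) powr \<bar>2*\<beta>\<bar>) * exp (- ((\<tau> - c)^2) / q)"
      by (rule mult_right_mono[OF a1]) simp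
    also have "\<dots> = (1 + \<bar>c - e\<bar>) powr (2*\<beta>) * ((1 + \<bar>\<tau> - c\<bar>) powr \<bar>2*\<beta>\<bar> * exp (- (1 / (2*q)) * (\<tau> - c)^2)) * exp (- ((\<tau> - c)^2) / (2 * q))"
      unfolding split by (simp add: mult_ac)
    also have "\<dots> \<le> (1 + \<bar>c - e\<bar>) powr (2*\<beta>) * E * exp (- ((\<tau> - c)^2) / (2 * q))"
      by (intro mult_right_mono mult_left_mono a2) auto
    finally show ?thesis by simp
  qed
  have "Jint q \<beta> e c \<le> (\<integral>\<^sup>+\<tau>. ennreal ((1 + \<bar>c - e\<bar>) powr (2*\<beta>) * E) * ennreal (exp (- ((\<tau> - c)^2) / (2 * q))) \<partial>lborel)"
    unfolding Jint_def
  proof (rule nn_integral_mono)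
    fix \<tau> :: real
    have "ennreal ((1 + \<bar>\<tau> - e\<bar>) powr (2*\<beta>) * exp (- ((\<tau> - c)^2) / q))
       \<le> ennreal (((1 + \<bar>c - e\<bar>) powr (2*\<beta>) * E) * exp (- ((\<tau> - c)^2) / (2 * q)))"
      by (rule ennreal_leI[OF pt])
    also have "\<dots> = ennreal ((1 + \<bar>c - e\<bar>) powr (2*\<beta>) * E) * ennreal (exp (- ((\<tau> - c)^2) / (2 * q)))"
      by (rule ennreal_mult') (simp add: E_def)
    finally show "ennreal ((1 + \<bar>\<tau> - e\<bar>) powr (2*\<beta>) * exp (- ((\<tau> - c)^2) / q))
       \<le> ennreal ((1 + \<bar>c - e\<bar>) powr (2*\<beta>) * E) * ennreal (exp (- ((\<tau> - c)^2) / (2 * q)))" .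
  qed
  also have "\<dots> = ennreal ((1 + \<bar>c - e\<bar>) powr (2*\<beta>) * E) * ennreal (sqrt (pi * (2 * q)))"
    using nn_integral_gauss_shift[of "2*q" c] q by (simp add: nn_integral_cmult)
  also have "\<dots> = ennreal (E * sqrt (pi * (2 * q)) * (1 + \<bar>c - e\<bar>) powr (2*\<beta>))"
    by (subst ennreal_mult'[symmetric]) (simp_all add: E_def mult_ac)
  finally show ?thesis unfolding E_def .
qed

lemma J_lower:
  fixes q \<beta> :: real
  assumes q: "0 < q"
  shows "ennreal (2 powr (- \<bar>2*\<beta>\<bar>) * exp (- 1 / q) * (1 + \<bar>c - e\<bar>) powr (2*\<beta>)) \<le> Jint q \<beta> e c"
proof -
  define L where "L = 2 powr (- \<bar>2*\<beta>\<bar>) * exp (- 1 / q) * (1 + \<bar>c - e\<bar>) powr (2*\<beta>)"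
  have pt: "L * indicator {c..c+1} \<tau> \<le> (1 + \<bar>\<tau> - e\<bar>) powr (2*\<beta>) * exp (- ((\<tau> - c)^2) / q)" for \<tau>
  proof (cases "\<tau> \<in> {c..c+1}")
    case True
    then have d: "\<bar>\<tau> - c\<bar> \<le> 1" by auto
    have b1: "(1 + \<bar>c - e\<bar>) powr (2*\<beta>) * (1 + \<bar>\<tau> - c\<bar>) powr (- \<bar>2*\<beta>\<bar>) \<le> (1 + \<bar>\<tau> - e\<bar>) powr (2*\<beta>)"
      using peetre_lower[of "c - e" "2*\<beta>" "\<tau> - c"] by simp
    have b2: "2 powr (- \<bar>2*\<beta>\<bar>) \<le> (1 + \<bar>\<tau> - c\<bar>) powr (- \<bar>2*\<beta>\<bar>)"
      by (rule powr_mono2') (use d in auto)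
    have b3: "exp (- 1 / q) \<le> exp (- ((\<tau> - c)^2) / q)"
    proof -
      have "(\<tau> - c)^2 \<le> 1" using d by (simp add: abs_square_le_1)
      then show ?thesis using q by (simp add: divide_le_cancel)
    qed
    have "L = (2 powr (- \<bar>2*\<beta>\<bar>) * (1 + \<bar>c - e\<bar>) powr (2*\<beta>)) * exp (- 1 / q)"
      unfolding L_def by (simp add: mult_ac)
    also have "\<dots> \<le> ((1 + \<bar>\<tau> - c\<bar>) powr (- \<bar>2*\<beta>\<bar>) * (1 + \<bar>c - e\<bar>) powr (2*\<beta>)) * exp (- ((\<tau> - c)^2) / q)"
      by (intro mult_mono b2 b3) auto
    also have "\<dots> \<le> (1 + \<bar>\<tau> - e\<bar>) powr (2*\<beta>) * exp (- ((\<tau> - c)^2) / q)"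
      by (rule mult_right_mono) (use b1 in \<open>auto simp: mult_ac\<close>)
    finally show ?thesis using True by simp
  next
    case False
    then show ?thesis by simp
  qed
  have L0: "0 \<le> L" unfolding L_def by simp
  have "ennreal L = (\<integral>\<^sup>+\<tau>. ennreal L * indicator {c..c+1} \<tau> \<partial>lborel)"
    by (simp add: nn_integral_cmult_indicator)
  also have "\<dots> \<le> Jint q \<beta> e c"
    unfolding Jint_def
  proof (rule nn_integral_mono)
    fix \<tau> :: real
    show "ennreal L * indicator {c..c+1} \<tau> \<le> ennreal ((1 + \<bar>\<tau> - e\<bar>) powr (2*\<beta>) * exp (- ((\<tau> - c)^2) / q))"
      using pt[of \<tau>] L0 by (cases "\<tau> \<in> {c..c+1}") (auto intro: ennreal_leI)
  qed
  finally show ?thesis unfolding L_def .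
qed

lemma nn_count_single:
  "(\<integral>\<^sup>+k'. (if k' = k then X else 0) \<partial>count_space (UNIV :: int set)) = X"
proof -
  have "(\<lambda>k'. (if k' = k then X else 0)) = (\<lambda>k'. X * indicator {k} k')"
    by (auto simp: indicator_def)
  then show ?thesis by (simp add: nn_integral_cmult_indicator)
qed

lemma Xnorm_wave:
  assumes a: "0 < a"
  shows "Xnorm \<alpha> s b (wave A k c a) =
    sqrt (((1 + \<bar>real_of_int k\<bar>) powr (2 * s) * (cmod A)^2 * (4 * pi^2 * (pi / a))) * enn2real (Jint (2*a) b (\<alpha> * (real_of_int k)^3) c))"
proof -
  define P where "P = (1 + \<bar>real_of_int k\<bar>) powr (2 * s) * (cmod A)^2 * (4 * pi^2 * (pi / a))"
  have P0: "0 \<le> P" unfolding P_def using a by simp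
  have inner: "(\<integral>\<^sup>+ \<tau>. ennreal ((1 + \<bar>real_of_int k'\<bar>) powr (2 * s)
          * (1 + \<bar>\<tau> - \<alpha> * (real_of_int k') ^ 3\<bar>) powr (2 * b)
          * (cmod (fourier_TR (wave A k c a) k' \<tau>))\<^sup>2) \<partial>lborel)
     = (if k' = k then ennreal P * Jint (2*a) b (\<alpha> * (real_of_int k)^3) c else 0)" for k'
  proof (cases "k' = k")
    case True
    have "\<And>\<tau>. (1 + \<bar>real_of_int k'\<bar>) powr (2 * s)
          * (1 + \<bar>\<tau> - \<alpha> * (real_of_int k') ^ 3\<bar>) powr (2 * b)
          * (cmod (fourier_TR (wave A k c a) k' \<tau>))\<^sup>2
        = P * ((1 + \<bar>\<tau> - \<alpha> * (real_of_int k)^3\<bar>) powr (2*b) * exp (- ((\<tau> - c)^2) / (2*a)))"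
    proof -
      fix \<tau>
      have e: "(exp (- ((c-\<tau>)^2 / (4*a))))^2 = exp (- ((\<tau> - c)^2 / (2*a)))"
      proof -
        have "(exp (- ((c-\<tau>)^2 / (4*a))))^2 = exp (2 * (- ((c-\<tau>)^2) / (4*a)))"
          by (simp add: power2_eq_square exp_add[symmetric])
        also have "2 * (- ((c-\<tau>)^2) / (4*a)) = - ((\<tau> - c)^2 / (2*a))"
          using a by (simp add: power2_commute field_simps)
        finally show ?thesis .
      qed
      have "(cmod (fourier_TR (wave A k c a) k' \<tau>))\<^sup>2 = (cmod A)^2 * (4 * pi^2 * (pi / a)) * exp (- ((\<tau> - c)^2) / (2*a))"
        using True a by (simp add: fourier_wave norm_mult power_mult_distrib e)
      then show "(1 + \<bar>real_of_int k'\<bar>) powr (2 * s)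
          * (1 + \<bar>\<tau> - \<alpha> * (real_of_int k') ^ 3\<bar>) powr (2 * b)
          * (cmod (fourier_TR (wave A k c a) k' \<tau>))\<^sup>2
        = P * ((1 + \<bar>\<tau> - \<alpha> * (real_of_int k)^3\<bar>) powr (2*b) * exp (- ((\<tau> - c)^2) / (2*a)))"
        using True by (simp add: P_def mult_ac)
    qed
    then have "(\<integral>\<^sup>+ \<tau>. ennreal ((1 + \<bar>real_of_int k'\<bar>) powr (2 * s)
          * (1 + \<bar>\<tau> - \<alpha> * (real_of_int k') ^ 3\<bar>) powr (2 * b)
          * (cmod (fourier_TR (wave A k c a) k' \<tau>))\<^sup>2) \<partial>lborel)
       = (\<integral>\<^sup>+ \<tau>. ennreal P * ennreal ((1 + \<bar>\<tau> - \<alpha> * (real_of_int k)^3\<bar>) powr (2*b) * exp (- ((\<tau> - c)^2) / (2*a))) \<partial>lborel)"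
      using P0 by (simp add: ennreal_mult')
    also have "\<dots> = ennreal P * Jint (2*a) b (\<alpha> * (real_of_int k)^3) c"
      unfolding Jint_def by (rule nn_integral_cmult) simp
    finally show ?thesis using True by simp
  next
    case False
    then show ?thesis using a by (simp add: fourier_wave)
  qed
  have "Xnorm \<alpha> s b (wave A k c a) = sqrt (enn2real (ennreal P * Jint (2*a) b (\<alpha> * (real_of_int k)^3) c))"
    unfolding Xnorm_def inner nn_count_single ..
  also have "\<dots> = sqrt (P * enn2real (Jint (2*a) b (\<alpha> * (real_of_int k)^3) c))"
    using P0 by (simp add: enn2real_mult)
  finally show ?thesis unfolding P_def .
qed

lemma J_real:
  fixes q \<beta> :: real
  assumes q: "0 < q"
  shows "2 powr (- \<bar>2*\<beta>\<bar>) * exp (- 1 / q) * (1 + \<bar>c - e\<bar>) powr (2*\<beta>) \<le> enn2real (Jint q \<beta> e c)"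
    and "enn2real (Jint q \<beta> e c) \<le> exp (2 * \<beta>^2 * q) * sqrt (pi * (2 * q)) * (1 + \<bar>c - e\<bar>) powr (2*\<beta>)"
proof -
  have up: "Jint q \<beta> e c \<le> ennreal (exp (2 * \<beta>^2 * q) * sqrt (pi * (2 * q)) * (1 + \<bar>c - e\<bar>) powr (2*\<beta>))"
    by (rule J_upper[OF q])
  then have fin: "Jint q \<beta> e c < top" using order.strict_trans1 by fastforce
  show "enn2real (Jint q \<beta> e c) \<le> exp (2 * \<beta>^2 * q) * sqrt (pi * (2 * q)) * (1 + \<bar>c - e\<bar>) powr (2*\<beta>)"
    using up q by (simp add: enn2real_leI)
  have lo: "ennreal (2 powr (- \<bar>2*\<beta>\<bar>) * exp (- 1 / q) * (1 + \<bar>c - e\<bar>) powr (2*\<beta>)) \<le> Jint q \<beta> e c"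
    by (rule J_lower[OF q])
  show "2 powr (- \<bar>2*\<beta>\<bar>) * exp (- 1 / q) * (1 + \<bar>c - e\<bar>) powr (2*\<beta>) \<le> enn2real (Jint q \<beta> e c)"
  proof -
    have X0: "0 \<le> 2 powr (- \<bar>2*\<beta>\<bar>) * exp (- 1 / q) * (1 + \<bar>c - e\<bar>) powr (2*\<beta>)" by simp
    have "enn2real (ennreal (2 powr (- \<bar>2*\<beta>\<bar>) * exp (- 1 / q) * (1 + \<bar>c - e\<bar>) powr (2*\<beta>))) \<le> enn2real (Jint q \<beta> e c)"
      by (rule enn2real_mono[OF lo fin])
    then show ?thesis using X0 by (simp only: enn2real_ennreal)
  qed
qed

lemma wave_mult: "wave A1 k1 c1 1 x t * wave A2 k2 c2 1 x t = wave (A1 * A2) (k1 + k2) (c1 + c2) 2 x t"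
proof -
  have "cis (of_int k1 * x + c1 * t) * cis (of_int k2 * x + c2 * t) = cis (of_int (k1 + k2) * x + (c1 + c2) * t)"
    by (simp add: cis_mult algebra_simps)
  moreover have "exp (- 1 * t^2) * exp (- 1 * t^2) = exp (- 2 * t^2)"
    by (simp add: exp_add[symmetric])
  moreover have "wave A1 k1 c1 1 x t * wave A2 k2 c2 1 x t = (A1 * A2) * (cis (of_int k1 * x + c1 * t) * cis (of_int k2 * x + c2 * t)) * complex_of_real (exp (- 1 * t^2) * exp (- 1 * t^2))"
    unfolding wave_def of_real_mult by (simp only: mult_ac)
  ultimately show ?thesis unfolding wave_def by simp
qed

lemma pdx_wave: "pdx (wave A k c a) = wave (\<i> * of_int k * A) k c a"
  unfolding wave_gw pdx_gw by (simp add: mult.assoc)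

lemma dx_prod_wave:
  "dx_prod (wave A1 k1 c1 1) (wave A2 k2 c2 1) = wave (\<i> * of_int (k1 + k2) * (A1 * A2)) (k1 + k2) (c1 + c2) 2"
  unfolding dx_prod_def wave_mult pdx_wave ..

lemma zero_mode_wave: "0 < a \<Longrightarrow> k \<noteq> 0 \<Longrightarrow> zero_mode (wave A k c a)"
  unfolding zero_mode_def by (simp add: fourier_wave)

lemma ratio_alg:
  fixes pk1 pk2 pk hH J0 J1 J2 U L0 Y ksq P0 P1 :: real
  assumes "0 < pk1" "0 < pk2" "0 \<le> pk" "1 \<le> hH" "0 \<le> J1" "0 \<le> J2" "J1 * J2 \<le> U^2 * Y"
    "L0 * Y / hH \<le> J0" "0 < U" "0 \<le> ksq" "0 < P0" "0 < P1" "0 \<le> L0"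
  shows "(P0 * L0 / (P1^2 * U^2)) * (ksq * pk / (pk1 * pk2 * hH)) * ((pk1 * P1 * J1) * (pk2 * P1 * J2)) \<le> pk * ksq * P0 * J0"
proof -
  define A where "A = P0 * ksq * pk / hH"
  have A0: "0 \<le> A" using assms unfolding A_def by simp
  have e1: "(pk1 * P1 * J1) * (pk2 * P1 * J2) = (pk1 * pk2) * P1^2 * (J1 * J2)"
    by (simp add: power2_eq_square mult_ac)
  have e2: "(P0 * L0 / (P1^2 * U^2)) * (ksq * pk / (pk1 * pk2 * hH)) * ((pk1 * pk2) * P1^2 * (J1 * J2))
      = A * (L0 * (J1 * J2) / U^2)"
    using assms unfolding A_def by (simp add: divide_simps)
  have "L0 * (J1 * J2) \<le> L0 * (U^2 * Y)" by (rule mult_left_mono) (use assms in auto)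
  then have "L0 * (J1 * J2) / U^2 \<le> L0 * Y"
    using assms by (simp add: divide_le_eq mult_ac)
  then have "A * (L0 * (J1 * J2) / U^2) \<le> A * (L0 * Y)" using A0 by (rule mult_left_mono)
  also have "A * (L0 * Y) = (P0 * ksq * pk) * (L0 * Y / hH)" unfolding A_def by simp
  also have "\<dots> \<le> (P0 * ksq * pk) * J0"
    by (rule mult_left_mono) (use assms in simp_all)
  finally show ?thesis unfolding e1 e2 by (simp add: mult_ac)
qed

definition Rf :: "real \<Rightarrow> real \<Rightarrow> real \<Rightarrow> int \<Rightarrow> int \<Rightarrow> real" where
  "Rf \<alpha>1 \<alpha>2 s k1 k2 = (real_of_int (k1 + k2))^2 * (1 + \<bar>real_of_int (k1 + k2)\<bar>) powr (2 * s)
     / ((1 + \<bar>real_of_int k1\<bar>) powr (2 * s) * (1 + \<bar>real_of_int k2\<bar>) powr (2 * s)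
        * (1 + \<bar>\<alpha>1 * (real_of_int k1)^3 + \<alpha>2 * (real_of_int k2)^3 - \<alpha>1 * (real_of_int (k1 + k2))^3\<bar>))"

lemma single_mode:
  fixes \<alpha>1 \<alpha>2 s b :: real
  shows "\<exists>\<kappa>>0. \<forall>k1 k2::int. \<exists>w1 w2. schwartz_TR w1 \<and> schwartz_TR w2 \<and> (k1 \<noteq> 0 \<longrightarrow> zero_mode w1) \<and> (k2 \<noteq> 0 \<longrightarrow> zero_mode w2)
     \<and> 0 < Xnorm \<alpha>1 s b w1 \<and> 0 < Xnorm \<alpha>2 s b w2
     \<and> \<kappa> * Rf \<alpha>1 \<alpha>2 s k1 k2 * ((Xnorm \<alpha>1 s b w1)^2 * (Xnorm \<alpha>2 s b w2)^2) \<le> (Xnorm \<alpha>1 s (b - 1) (dx_prod w1 w2))^2"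
proof -
  define U where "U = exp (2 * b^2 * 2) * sqrt (pi * (2 * 2))"
  define Lb where "Lb = 2 powr (- \<bar>2*b\<bar>) * exp (- 1 / 2)"
  define L0 where "L0 = 2 powr (- \<bar>2*(b-1)\<bar>) * exp (- 1 / 4)"
  define P1 where "P1 = 4 * pi^2 * (pi / 1)"
  define P0 where "P0 = 4 * pi^2 * (pi / 2)"
  have U0: "0 < U" unfolding U_def by simp
  have Lb0: "0 < Lb" unfolding Lb_def by simp
  have L00: "0 < L0" unfolding L0_def by simp
  have P10: "0 < P1" unfolding P1_def by simp
  have P00: "0 < P0" unfolding P0_def by simp
  show ?thesis
  proof (intro exI[of _ "P0 * L0 / (P1^2 * U^2)"] conjI allI)
    show "0 < P0 * L0 / (P1^2 * U^2)" using U0 L00 P10 P00 by simp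
    fix k1 k2 :: int
    define k where "k = k1 + k2"
    define H where "H = \<alpha>1 * (real_of_int k1)^3 + \<alpha>2 * (real_of_int k2)^3 - \<alpha>1 * (real_of_int k)^3"
    define h where "h = (if 1/2 \<le> b then 0 else H)"
    define c1 where "c1 = \<alpha>1 * (real_of_int k1)^3 - h"
    define c2 where "c2 = \<alpha>2 * (real_of_int k2)^3"
    define w1 where "w1 = wave 1 k1 c1 1"
    define w2 where "w2 = wave 1 k2 c2 1"
    define J1 where "J1 = enn2real (Jint (2*1) b (\<alpha>1 * (real_of_int k1)^3) c1)"
    define J2 where "J2 = enn2real (Jint (2*1) b (\<alpha>2 * (real_of_int k2)^3) c2)"
    define J0 where "J0 = enn2real (Jint (2*2) (b - 1) (\<alpha>1 * (real_of_int k)^3) (c1 + c2))"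
    define pk1 where "pk1 = (1 + \<bar>real_of_int k1\<bar>) powr (2 * s)"
    define pk2 where "pk2 = (1 + \<bar>real_of_int k2\<bar>) powr (2 * s)"
    define pk where "pk = (1 + \<bar>real_of_int k\<bar>) powr (2 * s)"
    define hH where "hH = 1 + \<bar>H\<bar>"
    have hH1: "1 \<le> hH" unfolding hH_def by simp
    have J1b: "Lb * (1 + \<bar>c1 - \<alpha>1 * (real_of_int k1)^3\<bar>) powr (2*b) \<le> J1"
              "J1 \<le> U * (1 + \<bar>c1 - \<alpha>1 * (real_of_int k1)^3\<bar>) powr (2*b)"
      using J_real[where q="2*1" and \<beta>=b and c=c1 and e="\<alpha>1 * (real_of_int k1)^3"] unfolding J1_def Lb_def U_def by simp_all
    have J2b: "Lb * (1 + \<bar>c2 - \<alpha>2 * (real_of_int k2)^3\<bar>) powr (2*b) \<le> J2"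
              "J2 \<le> U * (1 + \<bar>c2 - \<alpha>2 * (real_of_int k2)^3\<bar>) powr (2*b)"
      using J_real[where q="2*1" and \<beta>=b and c=c2 and e="\<alpha>2 * (real_of_int k2)^3"] unfolding J2_def Lb_def U_def by simp_all
    have J0b: "L0 * (1 + \<bar>(c1 + c2) - \<alpha>1 * (real_of_int k)^3\<bar>) powr (2*(b-1)) \<le> J0"
      using J_real[where q="2*2" and \<beta>="b - 1" and c="c1 + c2" and e="\<alpha>1 * (real_of_int k)^3"] unfolding J0_def L0_def by simp_all
    have J1p: "0 < J1" using J1b(1) Lb0 by (smt (verit) mult_pos_pos powr_gt_zero)
    have J2p: "0 < J2" using J2b(1) Lb0 by (smt (verit) mult_pos_pos powr_gt_zero)
    have X1: "(Xnorm \<alpha>1 s b w1)^2 = pk1 * P1 * J1" and X1p: "0 < Xnorm \<alpha>1 s b w1"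
    proof -
      have e: "Xnorm \<alpha>1 s b w1 = sqrt (pk1 * P1 * J1)"
        unfolding w1_def Xnorm_wave[OF zero_less_one] pk1_def P1_def J1_def by simp
      have "0 < pk1 * P1 * J1" using P10 J1p unfolding pk1_def by simp
      then show "(Xnorm \<alpha>1 s b w1)^2 = pk1 * P1 * J1" "0 < Xnorm \<alpha>1 s b w1" unfolding e by simp_all
    qed
    have X2: "(Xnorm \<alpha>2 s b w2)^2 = pk2 * P1 * J2" and X2p: "0 < Xnorm \<alpha>2 s b w2"
    proof -
      have e: "Xnorm \<alpha>2 s b w2 = sqrt (pk2 * P1 * J2)"
        unfolding w2_def Xnorm_wave[OF zero_less_one] pk2_def P1_def J2_def by simp
      have "0 < pk2 * P1 * J2" using P10 J2p unfolding pk2_def by simp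
      then show "(Xnorm \<alpha>2 s b w2)^2 = pk2 * P1 * J2" "0 < Xnorm \<alpha>2 s b w2" unfolding e by simp_all
    qed
    have J0p: "0 \<le> J0" unfolding J0_def by simp
    have X0: "(Xnorm \<alpha>1 s (b - 1) (dx_prod w1 w2))^2 = pk * (real_of_int k)^2 * P0 * J0"
    proof -
      have a2: "(0::real) < 2" by simp
      have nk: "(cmod (complex_of_int k1 + complex_of_int k2))^2 = (real_of_int k1 + real_of_int k2)^2"
        by (metis norm_of_int of_int_add power2_abs)
      have e: "Xnorm \<alpha>1 s (b - 1) (dx_prod w1 w2) = sqrt (pk * (real_of_int k)^2 * P0 * J0)"
        unfolding w1_def w2_def dx_prod_wave Xnorm_wave[OF a2] pk_def P0_def J0_def k_def
        by (simp add: norm_mult nk)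
      have "0 \<le> pk * (real_of_int k)^2 * P0 * J0" using P00 J0p unfolding pk_def by simp
      then show ?thesis unfolding e by simp
    qed
    have key: "J1 * J2 \<le> U^2 * (if 1/2 \<le> b then 1 else hH powr (2*b)) \<and> L0 * (if 1/2 \<le> b then 1 else hH powr (2*b)) / hH \<le> J0"
    proof (cases "1/2 \<le> b")
      case True
      then have "h = 0" unfolding h_def by simp
      then have c1e: "c1 - \<alpha>1 * (real_of_int k1)^3 = 0" and c2e: "c2 - \<alpha>2 * (real_of_int k2)^3 = 0"
        and c0e: "(c1 + c2) - \<alpha>1 * (real_of_int k)^3 = H"
        unfolding c1_def c2_def H_def by simp_all
      have "J1 * J2 \<le> U * U" using J1b(2) J2b(2) c1e c2e J1p J2p by (intro mult_mono) simp_all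
      moreover have "L0 / hH \<le> J0"
      proof -
        have p: "hH powr (-1) \<le> hH powr (2*(b-1))"
          by (rule powr_mono) (use True hH1 in simp_all)
        have "L0 / hH = L0 * hH powr (-1)" using hH1 by (simp add: powr_minus divide_inverse)
        also have "\<dots> \<le> L0 * hH powr (2*(b-1))" by (rule mult_left_mono[OF p]) (use L00 in simp)
        also have "\<dots> \<le> J0" using J0b c0e unfolding hH_def by simp
        finally show ?thesis .
      qed
      ultimately show ?thesis using True by (simp add: power2_eq_square)
    next
      case False
      then have "h = H" unfolding h_def by simp
      then have c1e: "c1 - \<alpha>1 * (real_of_int k1)^3 = - H" and c2e: "c2 - \<alpha>2 * (real_of_int k2)^3 = 0"
        and c0e: "(c1 + c2) - \<alpha>1 * (real_of_int k)^3 = 0"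
        unfolding c1_def c2_def H_def by simp_all
      have "J1 * J2 \<le> (U * hH powr (2*b)) * U" using J1b(2) J2b(2) c1e c2e J1p J2p
        by (intro mult_mono) (simp_all add: hH_def)
      moreover have "L0 * hH powr (2*b) / hH \<le> J0"
      proof -
        have "hH powr (2*b) \<le> hH powr 1"
          by (rule powr_mono) (use False hH1 in simp_all)
        then have "L0 * hH powr (2*b) \<le> L0 * hH" using L00 hH1 by (simp add: mult_left_mono)
        then have "L0 * hH powr (2*b) / hH \<le> L0 * hH / hH" using hH1 by (intro divide_right_mono) simp_all
        also have "\<dots> = L0" using hH1 by simp
        also have "\<dots> \<le> J0" using J0b c0e by simp
        finally show ?thesis .
      qed
      ultimately show ?thesis using False by (simp add: power2_eq_square mult_ac)
    qed
    have R: "Rf \<alpha>1 \<alpha>2 s k1 k2 = (real_of_int k)^2 * pk / (pk1 * pk2 * hH)"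
      unfolding Rf_def k_def pk_def pk1_def pk2_def hH_def H_def by simp
    have "P0 * L0 / (P1^2 * U^2) * Rf \<alpha>1 \<alpha>2 s k1 k2 * ((Xnorm \<alpha>1 s b w1)^2 * (Xnorm \<alpha>2 s b w2)^2)
       = (P0 * L0 / (P1^2 * U^2)) * ((real_of_int k)^2 * pk / (pk1 * pk2 * hH)) * ((pk1 * P1 * J1) * (pk2 * P1 * J2))"
      unfolding R X1 X2 ..
    also have "\<dots> \<le> pk * (real_of_int k)^2 * P0 * J0"
      by (rule ratio_alg[where Y="if 1/2 \<le> b then 1 else hH powr (2*b)"]) (use key hH1 J1p J2p U0 P00 P10 L00 in \<open>simp_all add: pk1_def pk2_def pk_def\<close>)
    also have "\<dots> = (Xnorm \<alpha>1 s (b - 1) (dx_prod w1 w2))^2" using X0 ..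
    finally have main: "P0 * L0 / (P1^2 * U^2) * Rf \<alpha>1 \<alpha>2 s k1 k2 * ((Xnorm \<alpha>1 s b w1)^2 * (Xnorm \<alpha>2 s b w2)^2)
       \<le> (Xnorm \<alpha>1 s (b - 1) (dx_prod w1 w2))^2" .
    show "\<exists>w1 w2. schwartz_TR w1 \<and> schwartz_TR w2 \<and> (k1 \<noteq> 0 \<longrightarrow> zero_mode w1) \<and> (k2 \<noteq> 0 \<longrightarrow> zero_mode w2)
     \<and> 0 < Xnorm \<alpha>1 s b w1 \<and> 0 < Xnorm \<alpha>2 s b w2
     \<and> P0 * L0 / (P1^2 * U^2) * Rf \<alpha>1 \<alpha>2 s k1 k2 * ((Xnorm \<alpha>1 s b w1)^2 * (Xnorm \<alpha>2 s b w2)^2) \<le> (Xnorm \<alpha>1 s (b - 1) (dx_prod w1 w2))^2"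
      by (rule exI[of _ w1], rule exI[of _ w2])
         (use main X1p X2p in \<open>simp add: w1_def w2_def schwartz_wave zero_mode_wave\<close>)
  qed
qed

lemma Xnorm_nonneg: "0 \<le> Xnorm \<alpha> s b w"
  unfolding Xnorm_def by simp

lemma noC:
  fixes \<alpha>1 \<alpha>2 s b :: real
  assumes unb: "\<And>M. \<exists>k1 k2. Zk k1 k2 \<and> M \<le> Rf \<alpha>1 \<alpha>2 s k1 k2"
    and impQ: "\<And>k1 k2 w1 w2. Zk k1 k2 \<Longrightarrow> schwartz_TR w1 \<Longrightarrow> schwartz_TR w2 \<Longrightarrow> (k1 \<noteq> 0 \<longrightarrow> zero_mode w1) \<Longrightarrow> (k2 \<noteq> 0 \<longrightarrow> zero_mode w2) \<Longrightarrow> Q w1 w2"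
  shows "\<not> (\<exists>C. \<forall>w1 w2. Q w1 w2 \<longrightarrow> bilin_est \<alpha>1 \<alpha>2 s b C w1 w2)"
proof
  assume "\<exists>C. \<forall>w1 w2. Q w1 w2 \<longrightarrow> bilin_est \<alpha>1 \<alpha>2 s b C w1 w2"
  then obtain C where C: "\<And>w1 w2. Q w1 w2 \<Longrightarrow> bilin_est \<alpha>1 \<alpha>2 s b C w1 w2" by blast
  have "\<exists>\<kappa>>0. \<forall>k1 k2::int. \<exists>w1 w2. schwartz_TR w1 \<and> schwartz_TR w2 \<and> (k1 \<noteq> 0 \<longrightarrow> zero_mode w1) \<and> (k2 \<noteq> 0 \<longrightarrow> zero_mode w2)
     \<and> 0 < Xnorm \<alpha>1 s b w1 \<and> 0 < Xnorm \<alpha>2 s b w2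
     \<and> \<kappa> * Rf \<alpha>1 \<alpha>2 s k1 k2 * ((Xnorm \<alpha>1 s b w1)^2 * (Xnorm \<alpha>2 s b w2)^2) \<le> (Xnorm \<alpha>1 s (b - 1) (dx_prod w1 w2))^2"
    by (rule single_mode)
  then obtain \<kappa> where \<kappa>sm: "\<kappa> > 0 \<and> (\<forall>k1 k2::int. \<exists>w1 w2. schwartz_TR w1 \<and> schwartz_TR w2 \<and> (k1 \<noteq> 0 \<longrightarrow> zero_mode w1) \<and> (k2 \<noteq> 0 \<longrightarrow> zero_mode w2)
     \<and> 0 < Xnorm \<alpha>1 s b w1 \<and> 0 < Xnorm \<alpha>2 s b w2
     \<and> \<kappa> * Rf \<alpha>1 \<alpha>2 s k1 k2 * ((Xnorm \<alpha>1 s b w1)^2 * (Xnorm \<alpha>2 s b w2)^2) \<le> (Xnorm \<alpha>1 s (b - 1) (dx_prod w1 w2))^2)" ..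
  have \<kappa>: "\<kappa> > 0" using \<kappa>sm by (rule conjunct1)
  have sm: "\<forall>k1 k2::int. \<exists>w1 w2. schwartz_TR w1 \<and> schwartz_TR w2 \<and> (k1 \<noteq> 0 \<longrightarrow> zero_mode w1) \<and> (k2 \<noteq> 0 \<longrightarrow> zero_mode w2)
     \<and> 0 < Xnorm \<alpha>1 s b w1 \<and> 0 < Xnorm \<alpha>2 s b w2
     \<and> \<kappa> * Rf \<alpha>1 \<alpha>2 s k1 k2 * ((Xnorm \<alpha>1 s b w1)^2 * (Xnorm \<alpha>2 s b w2)^2) \<le> (Xnorm \<alpha>1 s (b - 1) (dx_prod w1 w2))^2"
    using \<kappa>sm by (rule conjunct2)
  obtain k1 k2 where Z: "Zk k1 k2" and R: "C^2 / \<kappa> + 1 \<le> Rf \<alpha>1 \<alpha>2 s k1 k2" using unb by blast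
  from sm have "\<exists>w1 w2. schwartz_TR w1 \<and> schwartz_TR w2 \<and> (k1 \<noteq> 0 \<longrightarrow> zero_mode w1) \<and> (k2 \<noteq> 0 \<longrightarrow> zero_mode w2)
     \<and> 0 < Xnorm \<alpha>1 s b w1 \<and> 0 < Xnorm \<alpha>2 s b w2
     \<and> \<kappa> * Rf \<alpha>1 \<alpha>2 s k1 k2 * ((Xnorm \<alpha>1 s b w1)^2 * (Xnorm \<alpha>2 s b w2)^2) \<le> (Xnorm \<alpha>1 s (b - 1) (dx_prod w1 w2))^2"
    by (elim allE)
  then obtain w1 w2 where ww: "schwartz_TR w1 \<and> schwartz_TR w2 \<and> (k1 \<noteq> 0 \<longrightarrow> zero_mode w1) \<and> (k2 \<noteq> 0 \<longrightarrow> zero_mode w2)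
     \<and> 0 < Xnorm \<alpha>1 s b w1 \<and> 0 < Xnorm \<alpha>2 s b w2
     \<and> \<kappa> * Rf \<alpha>1 \<alpha>2 s k1 k2 * ((Xnorm \<alpha>1 s b w1)^2 * (Xnorm \<alpha>2 s b w2)^2) \<le> (Xnorm \<alpha>1 s (b - 1) (dx_prod w1 w2))^2"
    by (elim exE)
  note w = ww[THEN conjunct1] ww[THEN conjunct2, THEN conjunct1] ww[THEN conjunct2, THEN conjunct2, THEN conjunct1]
     ww[THEN conjunct2, THEN conjunct2, THEN conjunct2, THEN conjunct1]
  note X1 = ww[THEN conjunct2, THEN conjunct2, THEN conjunct2, THEN conjunct2, THEN conjunct1]
  note X2 = ww[THEN conjunct2, THEN conjunct2, THEN conjunct2, THEN conjunct2, THEN conjunct2, THEN conjunct1]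
  note ineq = ww[THEN conjunct2, THEN conjunct2, THEN conjunct2, THEN conjunct2, THEN conjunct2, THEN conjunct2]
  have est: "Xnorm \<alpha>1 s (b - 1) (dx_prod w1 w2) \<le> C * Xnorm \<alpha>1 s b w1 * Xnorm \<alpha>2 s b w2"
    using C[OF impQ[OF Z w]] unfolding bilin_est_def .
  define X where "X = Xnorm \<alpha>1 s b w1 * Xnorm \<alpha>2 s b w2"
  define Y where "Y = Xnorm \<alpha>1 s (b - 1) (dx_prod w1 w2)"
  have Xp: "0 < X" unfolding X_def using X1 X2 by simp
  have Y0: "0 \<le> Y" unfolding Y_def by (rule Xnorm_nonneg)
  have est': "Y \<le> C * X" using est unfolding X_def Y_def by (simp add: mult.assoc)
  have ineq': "\<kappa> * Rf \<alpha>1 \<alpha>2 s k1 k2 * X^2 \<le> Y^2" using ineq unfolding X_def Y_def by (simp add: power_mult_distrib)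
  have "C^2 + \<kappa> \<le> \<kappa> * Rf \<alpha>1 \<alpha>2 s k1 k2"
  proof -
    have "\<kappa> * (C^2 / \<kappa> + 1) \<le> \<kappa> * Rf \<alpha>1 \<alpha>2 s k1 k2" using R \<kappa> by simp
    then show ?thesis using \<kappa> by (simp add: distrib_left)
  qed
  then have "(C^2 + \<kappa>) * X^2 \<le> \<kappa> * Rf \<alpha>1 \<alpha>2 s k1 k2 * X^2"
    by (rule mult_right_mono) simp
  then have "(C^2 + \<kappa>) * X^2 \<le> Y^2" using ineq' by linarith
  moreover have "Y^2 \<le> (C * X)^2"
    using est' Y0 by (simp add: power_mono)
  ultimately have "(C^2 + \<kappa>) * X^2 \<le> C^2 * X^2" by (simp add: power_mult_distrib)
  then have "\<kappa> * X^2 \<le> 0" by (simp add: distrib_right)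
  then show False using \<kappa> Xp by (simp add: mult_le_0_iff)
qed

lemma powr_unbounded:
  fixes e M :: real
  assumes e: "0 < e"
  shows "\<exists>N::nat. \<forall>x::real. real N \<le> x \<longrightarrow> M \<le> x powr e"
proof -
  define T where "T = (max 1 M) powr (1 / e)"
  show ?thesis
  proof (intro exI[of _ "nat \<lceil>T\<rceil>"] allI impI)
    fix x :: real
    assume "real (nat \<lceil>T\<rceil>) \<le> x"
    then have Tx: "T \<le> x" by linarith
    have T0: "0 \<le> T" unfolding T_def by simp
    have "M \<le> max 1 M" by simp
    also have "max 1 M = T powr e" unfolding T_def using e by (simp add: powr_powr)
    also have "\<dots> \<le> x powr e" by (rule powr_mono2) (use e T0 Tx in auto)
    finally show "M \<le> x powr e" .
  qed
qed

lemma jp_pow: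
  fixes x n a A e :: real
  assumes n: "1 \<le> n" and a: "0 < a" and lo: "a * n \<le> \<bar>x\<bar>" and hi: "\<bar>x\<bar> \<le> A * n"
  shows "min (a powr e) ((A + 1) powr e) * n powr e \<le> (1 + \<bar>x\<bar>) powr e"
proof -
  have l: "a * n \<le> 1 + \<bar>x\<bar>" using lo by simp
  have h: "1 + \<bar>x\<bar> \<le> (A + 1) * n" using hi n by (simp add: algebra_simps)
  have an: "0 < a * n" using a n by simp
  show ?thesis
  proof (cases "0 \<le> e")
    case True
    have "min (a powr e) ((A + 1) powr e) * n powr e \<le> a powr e * n powr e"
      by (rule mult_right_mono) simp_all
    also have "\<dots> = (a * n) powr e" using a n by (simp add: powr_mult)
    also have "\<dots> \<le> (1 + \<bar>x\<bar>) powr e" by (rule powr_mono2) (use True an l in auto)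
    finally show ?thesis .
  next
    case False
    have A1: "0 < (A + 1) * n" using an h by linarith
    have A1': "0 < A + 1" using A1 n by (smt (verit) mult_nonpos_nonneg)
    have "min (a powr e) ((A + 1) powr e) * n powr e \<le> (A + 1) powr e * n powr e"
      by (rule mult_right_mono) simp_all
    also have "\<dots> = ((A + 1) * n) powr e" using A1' n by (simp add: powr_mult)
    also have "\<dots> \<le> (1 + \<bar>x\<bar>) powr e" by (rule powr_mono2') (use False an l h in auto)
    finally show ?thesis .
  qed
qed

lemma scale_bound:
  fixes n a A B \<gamma> s x x1 x2 hh :: real
  assumes n: "1 \<le> n" and a: "0 < a" and B: "0 < B"
    and b0: "a * n \<le> \<bar>x\<bar>" "\<bar>x\<bar> \<le> A * n"
    and b1: "a * n \<le> \<bar>x1\<bar>" "\<bar>x1\<bar> \<le> A * n"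
    and b2: "a * n \<le> \<bar>x2\<bar>" "\<bar>x2\<bar> \<le> A * n"
    and hh: "0 < hh" "hh \<le> B * n powr \<gamma>"
  shows "(a^2 * min (a powr (2 * s)) ((A + 1) powr (2 * s)) * (min (a powr (-(2 * s))) ((A + 1) powr (-(2 * s))))^2 / B) * n powr (2 - 2 * s - \<gamma>)
     \<le> x^2 * (1 + \<bar>x\<bar>) powr (2 * s) / ((1 + \<bar>x1\<bar>) powr (2 * s) * (1 + \<bar>x2\<bar>) powr (2 * s) * hh)"
proof -
  define m1 where "m1 = min (a powr (2 * s)) ((A + 1) powr (2 * s))"
  define m2 where "m2 = min (a powr (-(2 * s))) ((A + 1) powr (-(2 * s)))"
  have "a * n \<le> A * n" using b0 by linarith
  then have "a \<le> A" using n by (simp add: mult_le_cancel_right_pos)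
  then have A1: "0 < A + 1" using a by simp
  have m1: "0 < m1" unfolding m1_def using a A1 by simp
  have m2: "0 < m2" unfolding m2_def using a A1 by simp
  have p0: "m1 * n powr (2 * s) \<le> (1 + \<bar>x\<bar>) powr (2 * s)" unfolding m1_def by (rule jp_pow[OF n a b0])
  have p1: "m2 * n powr (-(2 * s)) \<le> (1 + \<bar>x1\<bar>) powr (-(2 * s))" unfolding m2_def by (rule jp_pow[OF n a b1])
  have p2: "m2 * n powr (-(2 * s)) \<le> (1 + \<bar>x2\<bar>) powr (-(2 * s))" unfolding m2_def by (rule jp_pow[OF n a b2])
  have sq: "(a * n)^2 \<le> x^2"
  proof -
    have "(a * n)^2 \<le> \<bar>x\<bar>^2" by (rule power_mono[OF b0(1)]) (use a n in simp)
    then show ?thesis by simp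
  qed
  have np: "0 < n" using n by simp
  have eq0: "x^2 * (1 + \<bar>x\<bar>) powr (2 * s) / ((1 + \<bar>x1\<bar>) powr (2 * s) * (1 + \<bar>x2\<bar>) powr (2 * s) * hh)
      = (x^2 * (1 + \<bar>x\<bar>) powr (2 * s) * (1 + \<bar>x1\<bar>) powr (-(2 * s)) * (1 + \<bar>x2\<bar>) powr (-(2 * s))) / hh"
    by (simp add: powr_minus divide_inverse mult_ac)
  define LL where "LL = (a * n)^2 * (m1 * n powr (2 * s)) * (m2 * n powr (-(2 * s))) * (m2 * n powr (-(2 * s)))"
  define RR where "RR = x^2 * (1 + \<bar>x\<bar>) powr (2 * s) * (1 + \<bar>x1\<bar>) powr (-(2 * s)) * (1 + \<bar>x2\<bar>) powr (-(2 * s))"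
  have LR: "LL \<le> RR"
  proof -
    have s1: "(a * n)^2 * (m1 * n powr (2 * s)) \<le> x^2 * (1 + \<bar>x\<bar>) powr (2 * s)"
      by (rule mult_mono[OF sq p0]) (use m1 in simp_all)
    have s2: "(a * n)^2 * (m1 * n powr (2 * s)) * (m2 * n powr (-(2 * s))) \<le> x^2 * (1 + \<bar>x\<bar>) powr (2 * s) * (1 + \<bar>x1\<bar>) powr (-(2 * s))"
      by (rule mult_mono[OF s1 p1]) (use m2 in simp_all)
    show ?thesis unfolding LL_def RR_def
      by (rule mult_mono[OF s2 p2]) (use m2 in simp_all)
  qed
  have RR0: "0 \<le> RR" unfolding RR_def by simp
  have "LL / (B * n powr \<gamma>) \<le> RR / hh"
    by (rule frac_le[OF RR0 LR hh(1) hh(2)])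
  then have "((a * n)^2 * (m1 * n powr (2 * s)) * (m2 * n powr (-(2 * s))) * (m2 * n powr (-(2 * s)))) / (B * n powr \<gamma>)
     \<le> x^2 * (1 + \<bar>x\<bar>) powr (2 * s) / ((1 + \<bar>x1\<bar>) powr (2 * s) * (1 + \<bar>x2\<bar>) powr (2 * s) * hh)"
    unfolding LL_def RR_def eq0 .
  note F1 = this
  have F2: "((a * n)^2 * (m1 * n powr (2 * s)) * (m2 * n powr (-(2 * s))) * (m2 * n powr (-(2 * s)))) / (B * n powr \<gamma>)
      = (a^2 * m1 * m2^2 / B) * n powr (2 - 2 * s - \<gamma>)"
  proof -
    define P where "P = n powr (2 * s)"
    define Q where "Q = n powr (-(2 * s))"
    define G where "G = n powr \<gamma>"
    have G0: "0 < G" unfolding G_def using np by simp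
    have PQ: "P * Q = 1" unfolding P_def Q_def using np by (simp add: powr_minus)
    have E: "n powr (2 - 2 * s - \<gamma>) = n^2 * Q / G"
    proof -
      have d1: "n powr (2 + (-(2 * s)) - \<gamma>) = n powr (2 + (-(2 * s))) / n powr \<gamma>" by (rule powr_diff)
      have d2: "n powr (2 + (-(2 * s))) = n powr 2 * n powr (-(2 * s))" by (rule powr_add)
      have d3: "2 + (-(2 * s)) - \<gamma> = 2 - 2 * s - \<gamma>" by simp
      have "n powr (2 - 2 * s - \<gamma>) = n powr 2 * n powr (-(2 * s)) / n powr \<gamma>"
        using d1 d2 unfolding d3 by simp
      also have "n powr 2 = n^2" using np by simp
      finally show ?thesis unfolding Q_def G_def .
    qed
    have "((a * n)^2 * (m1 * P) * (m2 * Q) * (m2 * Q)) / (B * G) = (a^2 * m1 * m2^2 / B) * (n^2 * (P * Q) * Q / G)"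
      using B G0 by (simp add: power_mult_distrib power2_eq_square)
    also have "\<dots> = (a^2 * m1 * m2^2 / B) * n powr (2 - 2 * s - \<gamma>)" unfolding E PQ by simp
    finally show ?thesis unfolding P_def Q_def G_def .
  qed
  have "(a^2 * m1 * m2^2 / B) * n powr (2 - 2 * s - \<gamma>)
     \<le> x^2 * (1 + \<bar>x\<bar>) powr (2 * s) / ((1 + \<bar>x1\<bar>) powr (2 * s) * (1 + \<bar>x2\<bar>) powr (2 * s) * hh)"
    using F1 unfolding F2 .
  then show ?thesis unfolding m1_def m2_def .
qed

lemma unb_from_scale:
  fixes c e :: real
  assumes c: "0 < c" and e: "0 < e"
    and fam: "\<And>T::real. \<exists>n k1 k2. T \<le> n \<and> Zk k1 k2 \<and> c * n powr e \<le> Rf \<alpha>1 \<alpha>2 s k1 k2"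
  shows "\<exists>k1 k2. Zk k1 k2 \<and> M \<le> Rf \<alpha>1 \<alpha>2 s k1 k2"
proof -
  obtain N :: nat where N: "\<And>x. real N \<le> x \<Longrightarrow> M / c \<le> x powr e"
    using powr_unbounded[OF e, of "M / c"] by blast
  obtain n k1 k2 where n: "real N \<le> n" and Z: "Zk k1 k2" and R: "c * n powr e \<le> Rf \<alpha>1 \<alpha>2 s k1 k2"
    using fam[of "real N"] by blast
  have "M / c \<le> n powr e" using N n by blast
  then have "M \<le> c * n powr e" using c by (simp add: divide_le_eq mult.commute)
  then show ?thesis using Z R by (intro exI[of _ k1] exI[of _ k2]) simp
qed

lemma Rf_k0: "Rf \<alpha>1 \<alpha>2 s k 0 = (real_of_int k)^2"
  by (simp add: Rf_def)

lemma Rf_0k: "Rf \<alpha> \<alpha> s 0 k = (real_of_int k)^2"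
  by (simp add: Rf_def)

lemma square_unb: "\<exists>k::int. k \<noteq> 0 \<and> M \<le> (real_of_int k)^2"
proof (intro exI conjI)
  define k where "k = \<lceil>\<bar>M\<bar>\<rceil> + 1"
  have k1: "1 \<le> real_of_int k" unfolding k_def by simp
  show "k \<noteq> 0" using k1 by auto
  have "M \<le> real_of_int k" unfolding k_def by linarith
  also have "\<dots> \<le> (real_of_int k)^2" using k1 by (simp add: power2_eq_square)
  finally show "M \<le> (real_of_int k)^2" .
qed

lemma part_e:
  fixes \<alpha>1 \<alpha>2 s b :: real
  shows "\<not> (\<exists>C. \<forall>w1 w2. schwartz_TR w1 \<and> schwartz_TR w2 \<longrightarrow> bilin_est \<alpha>1 \<alpha>2 s b C w1 w2)"
proof (rule noC[where Zk="\<lambda>k1 k2. True" and Q="\<lambda>w1 w2. schwartz_TR w1 \<and> schwartz_TR w2"])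
  fix M :: real
  obtain k :: int where "M \<le> (real_of_int k)^2" using square_unb by blast
  then show "\<exists>k1 k2. True \<and> M \<le> Rf \<alpha>1 \<alpha>2 s k1 k2"
    by (intro exI[of _ k] exI[of _ 0]) (simp add: Rf_k0)
qed simp

lemma part_c:
  fixes \<alpha> s b :: real
  shows "\<not> (\<exists>C. \<forall>w1 w2. schwartz_TR w1 \<and> schwartz_TR w2 \<and> zero_mode w2 \<longrightarrow> bilin_est \<alpha> \<alpha> s b C w1 w2)"
proof (rule noC[where Zk="\<lambda>k1 k2. k2 \<noteq> 0" and Q="\<lambda>w1 w2. schwartz_TR w1 \<and> schwartz_TR w2 \<and> zero_mode w2"])
  fix M :: real
  obtain k :: int where "k \<noteq> 0" "M \<le> (real_of_int k)^2" using square_unb by blast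
  then show "\<exists>k1 k2. k2 \<noteq> 0 \<and> M \<le> Rf \<alpha> \<alpha> s k1 k2"
    by (intro exI[of _ 0] exI[of _ k]) (simp add: Rf_0k)
qed simp

lemma part_b:
  fixes \<alpha> s b :: real
  assumes s: "s < -1/2"
  shows "\<not> (\<exists>C. \<forall>w1 w2. schwartz_TR w1 \<and> schwartz_TR w2 \<and> zero_mode w1 \<and> zero_mode w2 \<longrightarrow> bilin_est \<alpha> \<alpha> s b C w1 w2)"
proof (rule noC[where Zk="\<lambda>k1 k2. k1 \<noteq> 0 \<and> k2 \<noteq> 0" and Q="\<lambda>w1 w2. schwartz_TR w1 \<and> schwartz_TR w2 \<and> zero_mode w1 \<and> zero_mode w2"])
  fix M :: real
  define c where "c = 2 powr (2 * s) / (1 + 3 * \<bar>\<alpha>\<bar>)"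
  show "\<exists>k1 k2. (k1 \<noteq> 0 \<and> k2 \<noteq> 0) \<and> M \<le> Rf \<alpha> \<alpha> s k1 k2"
  proof (rule unb_from_scale[where c=c and e="-4 * s - 2"])
    show "0 < c" unfolding c_def by (simp add: add_pos_nonneg)
    show "0 < -4 * s - 2" using s by simp
    fix T :: real
    define N :: int where "N = \<lceil>\<bar>T\<bar>\<rceil> + 1"
    define m where "m = real_of_int N + 1"
    have N1: "1 \<le> real_of_int N" unfolding N_def by simp
    have m2: "2 \<le> m" unfolding m_def using N1 by simp
    have Tm: "T \<le> m" unfolding m_def N_def by linarith
    have H: "\<alpha> * (real_of_int (N + 1))^3 + \<alpha> * (real_of_int (- N))^3 - \<alpha> * (real_of_int (N + 1 + - N))^3
       = 3 * \<alpha> * real_of_int N * (real_of_int N + 1)"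
      by (simp add: power3_eq_cube algebra_simps)
    have R: "Rf \<alpha> \<alpha> s (N + 1) (- N) = 2 powr (2 * s) / (m powr (2 * s) * (m - 1 + 1 + 1) powr (2 * s) * (1 + \<bar>3 * \<alpha> * real_of_int N * (real_of_int N + 1)\<bar>))"
      unfolding Rf_def H using N1 unfolding m_def by (simp add: add.commute)
    have d1: "(m - 1 + 1 + 1) powr (2 * s) \<le> m powr (2 * s)"
      by (rule powr_mono2') (use s m2 in simp_all)
    have d2: "1 + \<bar>3 * \<alpha> * real_of_int N * (real_of_int N + 1)\<bar> \<le> (1 + 3 * \<bar>\<alpha>\<bar>) * m powr 2"
    proof -
      have "\<bar>3 * \<alpha> * real_of_int N * (real_of_int N + 1)\<bar> = 3 * \<bar>\<alpha>\<bar> * (real_of_int N * (real_of_int N + 1))"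
        using N1 by (simp add: abs_mult)
      also have "\<dots> \<le> 3 * \<bar>\<alpha>\<bar> * m^2"
        by (rule mult_left_mono) (use N1 in \<open>simp_all add: m_def power2_eq_square mult_mono\<close>)
      finally have "1 + \<bar>3 * \<alpha> * real_of_int N * (real_of_int N + 1)\<bar> \<le> 1 + 3 * \<bar>\<alpha>\<bar> * m^2" by simp
      also have "\<dots> \<le> (1 + 3 * \<bar>\<alpha>\<bar>) * m^2" using m2 by (simp add: algebra_simps)
      finally show ?thesis using m2 by simp
    qed
    have den: "m powr (2 * s) * (m - 1 + 1 + 1) powr (2 * s) * (1 + \<bar>3 * \<alpha> * real_of_int N * (real_of_int N + 1)\<bar>)
        \<le> (1 + 3 * \<bar>\<alpha>\<bar>) * m powr (4 * s + 2)"
    proof -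
      have "m powr (2 * s) * (m - 1 + 1 + 1) powr (2 * s) * (1 + \<bar>3 * \<alpha> * real_of_int N * (real_of_int N + 1)\<bar>)
          \<le> m powr (2 * s) * m powr (2 * s) * ((1 + 3 * \<bar>\<alpha>\<bar>) * m powr 2)"
        by (intro mult_mono mult_left_mono d1 d2) simp_all
      also have "\<dots> = (1 + 3 * \<bar>\<alpha>\<bar>) * m powr (4 * s + 2)"
      proof -
        have e1: "m powr (4 * s + 2) = m powr (2 * s + 2 * s) * m powr 2"
          by (subst powr_add[symmetric]) (simp add: algebra_simps)
        have e2: "m powr (2 * s + 2 * s) = m powr (2 * s) * m powr (2 * s)" by (rule powr_add)
        show ?thesis unfolding e1 e2 by (simp add: mult_ac)
      qed
      finally show ?thesis .
    qed
    have dpos: "0 < m powr (2 * s) * (m - 1 + 1 + 1) powr (2 * s) * (1 + \<bar>3 * \<alpha> * real_of_int N * (real_of_int N + 1)\<bar>)"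
      using m2 by simp
    have "c * m powr (-4 * s - 2) = 2 powr (2 * s) / ((1 + 3 * \<bar>\<alpha>\<bar>) * m powr (4 * s + 2))"
    proof -
      have ee: "-4 * s - 2 = - (4 * s + 2)" by simp
      have "m powr (-4 * s - 2) = 1 / m powr (4 * s + 2)" unfolding ee by (rule powr_minus_divide)
      then show ?thesis unfolding c_def by simp
    qed
    also have "\<dots> \<le> Rf \<alpha> \<alpha> s (N + 1) (- N)"
    proof -
      have pos2: "0 < (1 + 3 * \<bar>\<alpha>\<bar>) * m powr (4 * s + 2)" using m2 by (simp add: add_pos_nonneg)
      show ?thesis unfolding R by (rule divide_left_mono[OF den]) (use mult_pos_pos[OF pos2 dpos] in simp_all)
    qed
    finally have "c * m powr (-4 * s - 2) \<le> Rf \<alpha> \<alpha> s (N + 1) (- N)" .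
    then show "\<exists>n k1 k2. T \<le> n \<and> (k1 \<noteq> 0 \<and> k2 \<noteq> 0) \<and> c * n powr (-4 * s - 2) \<le> Rf \<alpha> \<alpha> s k1 k2"
      using Tm N1 by (intro exI[of _ m] exI[of _ "N + 1"] exI[of _ "- N"]) auto
  qed
qed simp

lemma scale_unb:
  fixes a A B \<gamma> s \<alpha>1 \<alpha>2 :: real
  assumes a: "0 < a" and B: "0 < B" and e: "0 < 2 - 2 * s - \<gamma>"
    and fam: "\<And>T::real. \<exists>n k1 k2. T \<le> n \<and> 1 \<le> n \<and> Zk k1 k2
       \<and> a * n \<le> \<bar>real_of_int (k1 + k2)\<bar> \<and> \<bar>real_of_int (k1 + k2)\<bar> \<le> A * n
       \<and> a * n \<le> \<bar>real_of_int k1\<bar> \<and> \<bar>real_of_int k1\<bar> \<le> A * n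
       \<and> a * n \<le> \<bar>real_of_int k2\<bar> \<and> \<bar>real_of_int k2\<bar> \<le> A * n
       \<and> 1 + \<bar>\<alpha>1 * (real_of_int k1)^3 + \<alpha>2 * (real_of_int k2)^3 - \<alpha>1 * (real_of_int (k1 + k2))^3\<bar> \<le> B * n powr \<gamma>"
  shows "\<exists>k1 k2. Zk k1 k2 \<and> M \<le> Rf \<alpha>1 \<alpha>2 s k1 k2"
proof -
  define c where "c = a^2 * min (a powr (2 * s)) ((A + 1) powr (2 * s)) * (min (a powr (-(2 * s))) ((A + 1) powr (-(2 * s))))^2 / B"
  have Apos: "0 < A + 1"
  proof -
    obtain n k1 k2 where "1 \<le> n" "a * n \<le> \<bar>real_of_int k1\<bar>" "\<bar>real_of_int k1\<bar> \<le> A * n"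
      using fam[of 0] by blast
    then have "a * n \<le> A * n" by linarith
    then have "a \<le> A" using \<open>1 \<le> n\<close> by (simp add: mult_le_cancel_right_pos)
    then show ?thesis using a by simp
  qed
  have m1: "0 < min (a powr (2 * s)) ((A + 1) powr (2 * s))" using a Apos by simp
  have m2: "0 < min (a powr (-(2 * s))) ((A + 1) powr (-(2 * s)))" using a Apos by simp
  have c: "0 < c" unfolding c_def by (intro divide_pos_pos mult_pos_pos zero_less_power m1 m2 a B)
  show ?thesis
  proof (rule unb_from_scale[OF c e])
    fix T :: real
    obtain n k1 k2 where n: "T \<le> n" "1 \<le> n" and Z: "Zk k1 k2"
      and b: "a * n \<le> \<bar>real_of_int (k1 + k2)\<bar>" "\<bar>real_of_int (k1 + k2)\<bar> \<le> A * n"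
       "a * n \<le> \<bar>real_of_int k1\<bar>" "\<bar>real_of_int k1\<bar> \<le> A * n"
       "a * n \<le> \<bar>real_of_int k2\<bar>" "\<bar>real_of_int k2\<bar> \<le> A * n"
      and h: "1 + \<bar>\<alpha>1 * (real_of_int k1)^3 + \<alpha>2 * (real_of_int k2)^3 - \<alpha>1 * (real_of_int (k1 + k2))^3\<bar> \<le> B * n powr \<gamma>"
      using fam[of T] by blast
    have "c * n powr (2 - 2 * s - \<gamma>) \<le> Rf \<alpha>1 \<alpha>2 s k1 k2"
      unfolding c_def Rf_def
      by (rule scale_bound[OF n(2) a B b(1) b(2) b(3) b(4) b(5) b(6) _ h]) simp
    then show "\<exists>n k1 k2. T \<le> n \<and> Zk k1 k2 \<and> c * n powr (2 - 2 * s - \<gamma>) \<le> Rf \<alpha>1 \<alpha>2 s k1 k2"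
      using n Z by blast
  qed
qed

lemma part_a:
  fixes \<alpha>1 \<alpha>2 s b :: real
  assumes s: "s < -1/2"
  shows "\<not> (\<exists>C. \<forall>w1 w2. schwartz_TR w1 \<and> schwartz_TR w2 \<and> zero_mode w2 \<longrightarrow> bilin_est \<alpha>1 \<alpha>2 s b C w1 w2)"
proof (rule noC[where Zk="\<lambda>k1 k2. k2 \<noteq> 0" and Q="\<lambda>w1 w2. schwartz_TR w1 \<and> schwartz_TR w2 \<and> zero_mode w2"])
  fix M :: real
  show "\<exists>k1 k2. k2 \<noteq> 0 \<and> M \<le> Rf \<alpha>1 \<alpha>2 s k1 k2"
  proof (rule scale_unb[where a=1 and A=2 and B="1 + \<bar>\<alpha>2 - 7 * \<alpha>1\<bar>" and \<gamma>=3])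
    show "(0::real) < 1" by simp
    show "0 < 1 + \<bar>\<alpha>2 - 7 * \<alpha>1\<bar>" by (simp add: add_pos_nonneg)
    show "0 < 2 - 2 * s - 3" using s by simp
    fix T :: real
    define N :: int where "N = \<lceil>\<bar>T\<bar>\<rceil> + 1"
    define n where "n = real_of_int N"
    have n1: "1 \<le> n" unfolding n_def N_def by simp
    have Tn: "T \<le> n" unfolding n_def N_def by linarith
    have H: "\<alpha>1 * (real_of_int N)^3 + \<alpha>2 * (real_of_int N)^3 - \<alpha>1 * (real_of_int (N + N))^3 = (\<alpha>2 - 7 * \<alpha>1) * n^3"
      unfolding n_def by (simp add: power3_eq_cube algebra_simps)
    have hb: "1 + \<bar>(\<alpha>2 - 7 * \<alpha>1) * n^3\<bar> \<le> (1 + \<bar>\<alpha>2 - 7 * \<alpha>1\<bar>) * n powr 3"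
    proof -
      have n3: "1 \<le> n^3" using n1 by simp
      have "1 + \<bar>(\<alpha>2 - 7 * \<alpha>1) * n^3\<bar> = 1 + \<bar>\<alpha>2 - 7 * \<alpha>1\<bar> * n^3" using n1 by (simp add: abs_mult)
      also have "\<dots> \<le> (1 + \<bar>\<alpha>2 - 7 * \<alpha>1\<bar>) * n^3" using n3 by (simp add: algebra_simps)
      finally have "1 + \<bar>(\<alpha>2 - 7 * \<alpha>1) * n^3\<bar> \<le> (1 + \<bar>\<alpha>2 - 7 * \<alpha>1\<bar>) * n^3" .
      moreover have "n powr 3 = n^3" using n1 by simp
      ultimately show ?thesis by simp
    qed
    show "\<exists>n k1 k2. T \<le> n \<and> 1 \<le> n \<and> k2 \<noteq> 0
       \<and> 1 * n \<le> \<bar>real_of_int (k1 + k2)\<bar> \<and> \<bar>real_of_int (k1 + k2)\<bar> \<le> 2 * n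
       \<and> 1 * n \<le> \<bar>real_of_int k1\<bar> \<and> \<bar>real_of_int k1\<bar> \<le> 2 * n
       \<and> 1 * n \<le> \<bar>real_of_int k2\<bar> \<and> \<bar>real_of_int k2\<bar> \<le> 2 * n
       \<and> 1 + \<bar>\<alpha>1 * (real_of_int k1)^3 + \<alpha>2 * (real_of_int k2)^3 - \<alpha>1 * (real_of_int (k1 + k2))^3\<bar> \<le> (1 + \<bar>\<alpha>2 - 7 * \<alpha>1\<bar>) * n powr 3"
      apply (rule exI[of _ n], rule exI[of _ N], rule exI[of _ N])
      using Tn n1 hb unfolding H by (auto simp: n_def)
  qed
qed simp

definition Tset :: "real \<Rightarrow> real \<Rightarrow> (int \<times> int) set" where
  "Tset \<rho> \<mu> = {(m :: int, n :: int). n \<noteq> 0 \<and>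
      0 < \<bar>\<rho> - real_of_int m / real_of_int n\<bar> \<and>
      \<bar>\<rho> - real_of_int m / real_of_int n\<bar> < \<bar>real_of_int n\<bar> powr (- \<mu>)}"

lemma irr_exp_T: "irr_exp \<rho> = Sup {ereal \<mu> | \<mu>. infinite (Tset \<rho> \<mu>)}"
  unfolding irr_exp_def Tset_def ..

lemma Tset_mono:
  assumes "\<mu> \<le> \<mu>'"
  shows "Tset \<rho> \<mu>' \<subseteq> Tset \<rho> \<mu>"
proof
  fix p assume p: "p \<in> Tset \<rho> \<mu>'"
  obtain m n where pe: "p = (m, n)" by (cases p)
  have n0: "n \<noteq> 0" and lt: "\<bar>\<rho> - real_of_int m / real_of_int n\<bar> < \<bar>real_of_int n\<bar> powr (- \<mu>')"
    and pos: "0 < \<bar>\<rho> - real_of_int m / real_of_int n\<bar>" using p pe unfolding Tset_def by auto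
  have n1: "1 \<le> \<bar>real_of_int n\<bar>" using n0 by linarith
  have "\<bar>real_of_int n\<bar> powr (- \<mu>') \<le> \<bar>real_of_int n\<bar> powr (- \<mu>)"
    by (rule powr_mono[OF _ n1]) (use assms in simp)
  then show "p \<in> Tset \<rho> \<mu>" using n0 lt pos pe unfolding Tset_def by auto
qed

lemma Tset_inf_sigma:
  assumes "ereal \<mu> < irr_exp \<rho>"
  shows "infinite (Tset \<rho> \<mu>)"
proof -
  obtain x where "x \<in> {ereal \<mu> | \<mu>. infinite (Tset \<rho> \<mu>)}" "ereal \<mu> < x"
    using assms unfolding irr_exp_T less_Sup_iff by blast
  then obtain \<mu>' where "infinite (Tset \<rho> \<mu>')" "\<mu> < \<mu>'" by auto
  then show ?thesis using Tset_mono[of \<mu> \<mu>' \<rho>] infinite_super by auto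
qed

lemma Tset_inf_irr:
  assumes irr: "\<rho> \<notin> \<rat>" and mu: "\<mu> \<le> 2"
  shows "infinite (Tset \<rho> \<mu>)"
proof -
  have "approx_set \<rho> \<subseteq> Tset \<rho> \<mu>"
  proof
    fix p assume p: "p \<in> approx_set \<rho>"
    then obtain h k where pe: "p = (h, k)" and k: "k > 0" and lt: "\<bar>\<rho> - of_int h / of_int k\<bar> < 1 / (of_int k)^2"
      unfolding approx_set_def by auto
    have ne: "\<rho> \<noteq> of_int h / of_int k"
    proof
      assume "\<rho> = of_int h / of_int k"
      then have "\<rho> \<in> \<rat>" by simp
      then show False using irr by simp
    qed
    have k1: "1 \<le> real_of_int k" using k by simp
    have "1 / (of_int k)^2 = real_of_int k powr (-2)"
      using k1 by (simp add: powr_minus_divide)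
    also have "\<dots> \<le> real_of_int k powr (- \<mu>)"
      by (rule powr_mono) (use mu k1 in simp_all)
    finally have "\<bar>\<rho> - of_int h / of_int k\<bar> < \<bar>real_of_int k\<bar> powr (- \<mu>)" using lt k by simp
    then show "p \<in> Tset \<rho> \<mu>" using pe k ne unfolding Tset_def by auto
  qed
  moreover have "infinite (approx_set \<rho>)" using irr rational_iff_finite_approx_set by blast
  ultimately show ?thesis using infinite_super by blast
qed

lemma irr_sigma_ge2:
  assumes irr: "\<rho> \<notin> \<rat>"
  shows "2 \<le> irr_exp \<rho>"
proof (rule ccontr)
  assume "\<not> 2 \<le> irr_exp \<rho>"
  then have "irr_exp \<rho> < ereal 2" by simp
  then obtain z where z1: "irr_exp \<rho> < ereal z" and z2: "ereal z < ereal 2" using ereal_dense2 by blast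
  have "z \<le> 2" using z2 by simp
  then have "infinite (Tset \<rho> z)" by (rule Tset_inf_irr[OF irr])
  then have "ereal z \<le> irr_exp \<rho>" unfolding irr_exp_T by (intro Sup_upper) auto
  then show False using z1 by simp
qed

lemma Tset_big:
  assumes inf: "infinite (Tset \<rho> \<mu>)" and mu: "0 \<le> \<mu>"
  shows "\<exists>m n. (m, n) \<in> Tset \<rho> \<mu> \<and> B < real_of_int n"
proof (rule ccontr)
  assume "\<not> ?thesis"
  then have nb: "\<And>m n. (m, n) \<in> Tset \<rho> \<mu> \<Longrightarrow> real_of_int n \<le> B" by force
  have sym: "(- m, - n) \<in> Tset \<rho> \<mu>" if "(m, n) \<in> Tset \<rho> \<mu>" for m n
    using that unfolding Tset_def by auto
  define K where "K = \<lceil>\<bar>B\<bar>\<rceil>"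
  define L where "L = \<lceil>\<bar>B\<bar> * (\<bar>\<rho>\<bar> + 1)\<rceil>"
  have "Tset \<rho> \<mu> \<subseteq> {-L..L} \<times> {-K..K}"
  proof
    fix p assume p: "p \<in> Tset \<rho> \<mu>"
    obtain m n where pe: "p = (m, n)" by (cases p)
    have mn: "(m, n) \<in> Tset \<rho> \<mu>" using p pe by simp
    have n0: "n \<noteq> 0" and lt: "\<bar>\<rho> - real_of_int m / real_of_int n\<bar> < \<bar>real_of_int n\<bar> powr (- \<mu>)"
      using mn unfolding Tset_def by auto
    have n1: "real_of_int n \<le> B" using nb[OF mn] .
    have n2: "- real_of_int n \<le> B" using nb[OF sym[OF mn]] by simp
    have nabs: "\<bar>real_of_int n\<bar> \<le> \<bar>B\<bar>" using n1 n2 by linarith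
    have na1: "1 \<le> \<bar>real_of_int n\<bar>" using n0 by linarith
    have "\<bar>real_of_int n\<bar> powr (- \<mu>) \<le> 1"
      using na1 mu by (simp add: powr_le_one_le ge_one_powr_ge_zero powr_minus_divide)
    then have lt1: "\<bar>\<rho> - real_of_int m / real_of_int n\<bar> < 1" using lt by linarith
    have "\<bar>real_of_int m / real_of_int n\<bar> \<le> \<bar>\<rho>\<bar> + 1" using lt1 by linarith
    then have "\<bar>real_of_int m\<bar> \<le> (\<bar>\<rho>\<bar> + 1) * \<bar>real_of_int n\<bar>"
      using na1 by (simp add: abs_div divide_le_eq)
    also have "\<dots> \<le> (\<bar>\<rho>\<bar> + 1) * \<bar>B\<bar>" by (rule mult_left_mono[OF nabs]) simp
    finally have mabs: "\<bar>real_of_int m\<bar> \<le> \<bar>B\<bar> * (\<bar>\<rho>\<bar> + 1)" by (simp add: mult.commute)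
    have "\<bar>m\<bar> \<le> L" unfolding L_def using mabs by linarith
    moreover have "\<bar>n\<bar> \<le> K" unfolding K_def using nabs by linarith
    ultimately show "p \<in> {-L..L} \<times> {-K..K}" using pe by auto
  qed
  then have "finite (Tset \<rho> \<mu>)" by (rule finite_subset) simp
  then show False using inf by simp
qed

lemma s_r_le1: "s_r r \<le> 1"
proof (cases "2 \<le> sigma_r r \<and> sigma_r r < 3")
  case True
  then obtain x where x: "sigma_r r = ereal x" by (cases "sigma_r r") auto
  then have "x < 3" using True by simp
  then show ?thesis unfolding s_r_def using True x by simp
next
  case False
  then show ?thesis unfolding s_r_def by auto
qed

lemma choose_mu:
  assumes irr: "sqrt (12 * r - 3) \<notin> \<rat>" and s: "s < s_r r"
  shows "\<exists>\<mu>. 1 < \<mu> \<and> 2 * s + 1 < \<mu> \<and> \<mu> \<le> 3 \<and> infinite (Tset (sqrt (12 * r - 3)) \<mu>)"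
proof (cases "s < 1/2")
  case True
  define \<mu> where "\<mu> = (max 1 (2 * s + 1) + 2) / 2"
  have "\<mu> \<le> 2" using True unfolding \<mu>_def by simp
  then have "infinite (Tset (sqrt (12 * r - 3)) \<mu>)" by (rule Tset_inf_irr[OF irr])
  moreover have "1 < \<mu>" "2 * s + 1 < \<mu>" "\<mu> \<le> 3" using True unfolding \<mu>_def by auto
  ultimately show ?thesis by blast
next
  case False
  have sig: "sigma_r r = irr_exp (sqrt (12 * r - 3))" unfolding sigma_r_def ..
  have ge2: "2 \<le> sigma_r r" unfolding sig by (rule irr_sigma_ge2[OF irr])
  show ?thesis
  proof (cases "sigma_r r < 3")
    case True
    then obtain x where x: "sigma_r r = ereal x" using ge2 by (cases "sigma_r r") auto
    have sx: "s < (x - 1) / 2" using s True ge2 x unfolding s_r_def by simp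
    have x3: "x < 3" using True x by simp
    define \<mu> where "\<mu> = (2 * s + 1 + x) / 2"
    have "ereal \<mu> < irr_exp (sqrt (12 * r - 3))" using sx x unfolding sig[symmetric] \<mu>_def by simp
    then have "infinite (Tset (sqrt (12 * r - 3)) \<mu>)" by (rule Tset_inf_sigma)
    moreover have "1 < \<mu>" "2 * s + 1 < \<mu>" "\<mu> \<le> 3" using False sx x3 unfolding \<mu>_def by auto
    ultimately show ?thesis by blast
  next
    case False2: False
    have "s_r r = 1" unfolding s_r_def using False2 by auto
    then have s1: "s < 1" using s by simp
    define \<mu> where "\<mu> = s + 2"
    have "ereal \<mu> < ereal 3" using s1 unfolding \<mu>_def by simp
    also have "ereal 3 \<le> irr_exp (sqrt (12 * r - 3))" using False2 unfolding sig by simp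
    finally have "infinite (Tset (sqrt (12 * r - 3)) \<mu>)" by (rule Tset_inf_sigma)
    moreover have "1 < \<mu>" "2 * s + 1 < \<mu>" "\<mu> \<le> 3" using False s1 unfolding \<mu>_def by auto
    ultimately show ?thesis by blast
  qed
qed

lemma int_scale_bounds:
  fixes x A N :: int
  assumes N: "0 < N" and x1: "1 \<le> \<bar>x\<bar>" and xA: "\<bar>x\<bar> \<le> A"
  shows "1 * real_of_int N \<le> \<bar>real_of_int (x * N)\<bar>" "\<bar>real_of_int (x * N)\<bar> \<le> real_of_int A * real_of_int N"
proof -
  have e: "\<bar>x * N\<bar> = \<bar>x\<bar> * N" using N by (simp add: abs_mult)
  have "1 * N \<le> \<bar>x\<bar> * N" by (rule mult_right_mono[OF x1]) (use N in simp)
  then have "N \<le> \<bar>x * N\<bar>" using e by simp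
  then show "1 * real_of_int N \<le> \<bar>real_of_int (x * N)\<bar>"
    by (metis mult_1 of_int_abs of_int_le_iff)
  have "\<bar>x\<bar> * N \<le> A * N" by (rule mult_right_mono[OF xA]) (use N in simp)
  then have "\<bar>x * N\<bar> \<le> A * N" using e by simp
  then show "\<bar>real_of_int (x * N)\<bar> \<le> real_of_int A * real_of_int N"
    by (metis of_int_abs of_int_le_iff of_int_mult)
qed

lemma fam_rat:
  fixes \<alpha>1 r s M :: real
  assumes r4: "1/4 \<le> r" and r1: "r \<noteq> 1" and rat: "sqrt (12 * r - 3) \<in> \<rat>" and s: "s < 1"
  shows "\<exists>k1 k2. k2 \<noteq> 0 \<and> M \<le> Rf \<alpha>1 (r * \<alpha>1) s k1 k2"
proof -
  define \<rho> where "\<rho> = sqrt (12 * r - 3)"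
  have h3: "0 \<le> 12 * r - 3" using r4 by linarith
  have rho0: "0 \<le> \<rho>" unfolding \<rho>_def using h3 by simp
  from h3 have rho2: "\<rho>^2 = 12 * r - 3" unfolding \<rho>_def by simp
  obtain p q :: int where q: "q > 0" and pq: "\<rho> = of_int p / of_int q"
    using rat unfolding \<rho>_def[symmetric] by (blast elim: Rats_cases')
  have Qp: "0 < real_of_int q" using q by simp
  have p0: "0 \<le> p"
  proof -
    have "0 \<le> real_of_int p / real_of_int q" using rho0 pq by simp
    then show ?thesis using Qp by (simp add: zero_le_divide_iff)
  qed
  have PQ: "(real_of_int p)^2 = (12 * r - 3) * (real_of_int q)^2"
  proof -
    have "real_of_int p = \<rho> * real_of_int q" using pq Qp by simp
    then show ?thesis using rho2 by (simp add: power_mult_distrib)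
  qed
  have p3: "p - 3 * q \<noteq> 0"
  proof
    assume "p - 3 * q = 0"
    then have "real_of_int p = 3 * real_of_int q" by linarith
    then have "9 * (real_of_int q)^2 = (12 * r - 3) * (real_of_int q)^2" using PQ by (simp add: power_mult_distrib)
    then have "12 * r - 3 = 9" using Qp by simp
    then show False using r1 by simp
  qed
  show ?thesis
  proof (rule scale_unb[where a=1 and A="real_of_int (p + 9 * q)" and B=1 and \<gamma>=0])
    show "(0::real) < 1" "(0::real) < 1" by simp_all
    show "0 < 2 - 2 * s - 0" using s by simp
    fix T :: real
    define N :: int where "N = \<lceil>\<bar>T\<bar>\<rceil> + 1"
    define n where "n = real_of_int N"
    have N0: "0 < N" unfolding N_def by simp
    have n1: "1 \<le> n" unfolding n_def N_def by simp
    have Tn: "T \<le> n" unfolding n_def N_def by linarith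
    have H: "\<alpha>1 * (real_of_int ((p - 3 * q) * N))^3 + r * \<alpha>1 * (real_of_int (6 * q * N))^3
        - \<alpha>1 * (real_of_int ((p - 3 * q) * N + 6 * q * N))^3 = 0"
    proof -
      have "\<alpha>1 * (real_of_int ((p - 3 * q) * N))^3 + r * \<alpha>1 * (real_of_int (6 * q * N))^3
        - \<alpha>1 * (real_of_int ((p - 3 * q) * N + 6 * q * N))^3
        = 18 * \<alpha>1 * real_of_int q * (real_of_int N)^3 * ((12 * r - 3) * (real_of_int q)^2 - (real_of_int p)^2)"
        by (simp add: power3_eq_cube power2_eq_square algebra_simps)
      also have "\<dots> = 0" using PQ by simp
      finally show ?thesis .
    qed
    have b1: "1 * real_of_int N \<le> \<bar>real_of_int ((p + 3 * q) * N)\<bar>" "\<bar>real_of_int ((p + 3 * q) * N)\<bar> \<le> real_of_int (p + 9 * q) * real_of_int N"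
      using int_scale_bounds[where x="p + 3 * q" and A="p + 9 * q" and N=N] N0 p0 q by simp_all
    have b2: "1 * real_of_int N \<le> \<bar>real_of_int ((p - 3 * q) * N)\<bar>" "\<bar>real_of_int ((p - 3 * q) * N)\<bar> \<le> real_of_int (p + 9 * q) * real_of_int N"
      using int_scale_bounds[where x="p - 3 * q" and A="p + 9 * q" and N=N] N0 p0 q p3 by (simp_all add: abs_if)
    have b3: "1 * real_of_int N \<le> \<bar>real_of_int ((6 * q) * N)\<bar>" "\<bar>real_of_int ((6 * q) * N)\<bar> \<le> real_of_int (p + 9 * q) * real_of_int N"
      using int_scale_bounds[where x="6 * q" and A="p + 9 * q" and N=N] N0 p0 q by simp_all
    have k: "(p - 3 * q) * N + 6 * q * N = (p + 3 * q) * N" by (simp add: algebra_simps)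
    show "\<exists>n k1 k2. T \<le> n \<and> 1 \<le> n \<and> k2 \<noteq> 0
       \<and> 1 * n \<le> \<bar>real_of_int (k1 + k2)\<bar> \<and> \<bar>real_of_int (k1 + k2)\<bar> \<le> real_of_int (p + 9 * q) * n
       \<and> 1 * n \<le> \<bar>real_of_int k1\<bar> \<and> \<bar>real_of_int k1\<bar> \<le> real_of_int (p + 9 * q) * n
       \<and> 1 * n \<le> \<bar>real_of_int k2\<bar> \<and> \<bar>real_of_int k2\<bar> \<le> real_of_int (p + 9 * q) * n
       \<and> 1 + \<bar>\<alpha>1 * (real_of_int k1)^3 + r * \<alpha>1 * (real_of_int k2)^3 - \<alpha>1 * (real_of_int (k1 + k2))^3\<bar> \<le> 1 * n powr 0"
      apply (rule exI[of _ n], rule exI[of _ "(p - 3 * q) * N"], rule exI[of _ "6 * q * N"])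
      using Tn n1 q N0 b1 b2 b3 H unfolding k n_def by (auto simp: mult.assoc)
  qed
qed

lemma fam_irr:
  fixes \<alpha>1 r s M \<mu> :: real
  assumes r4: "1/4 \<le> r" and r1: "r \<noteq> 1"
    and mu1: "1 < \<mu>" and mus: "2 * s + 1 < \<mu>" and mu3: "\<mu> \<le> 3"
    and inf: "infinite (Tset (sqrt (12 * r - 3)) \<mu>)"
  shows "\<exists>k1 k2. k2 \<noteq> 0 \<and> M \<le> Rf \<alpha>1 (r * \<alpha>1) s k1 k2"
proof -
  define \<rho> where "\<rho> = sqrt (12 * r - 3)"
  have h3: "0 \<le> 12 * r - 3" using r4 by linarith
  have rho0: "0 \<le> \<rho>" unfolding \<rho>_def using h3 by simp
  from h3 have rho2: "\<rho>^2 = 12 * r - 3" unfolding \<rho>_def by simp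
  have rho3: "\<rho> \<noteq> 3"
  proof
    assume "\<rho> = 3"
    then have "12 * r - 3 = 9" using rho2 by simp
    then show False using r1 by simp
  qed
  define g where "g = \<bar>\<rho> - 3\<bar>"
  have g0: "0 < g" unfolding g_def using rho3 by simp
  define C where "C = 18 * \<bar>\<alpha>1\<bar> * (2 * \<rho> + 1)"
  have C0: "0 \<le> C" unfolding C_def using rho0 by simp
  show ?thesis
  proof (rule scale_unb[where a="min 2 (g / 2)" and A="\<rho> + 7" and B="1 + C" and \<gamma>="3 - \<mu>"])
    show "0 < min 2 (g / 2)" using g0 by simp
    show "0 < 1 + C" using C0 by simp
    show "0 < 2 - 2 * s - (3 - \<mu>)" using mus by simp
    fix T :: real
    obtain m n where mn: "(m, n) \<in> Tset \<rho> \<mu>" and nbig: "\<bar>T\<bar> + 2 / g + 1 < real_of_int n"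
      using Tset_big[of \<rho> \<mu> "\<bar>T\<bar> + 2 / g + 1"] inf mu1 unfolding \<rho>_def by auto
    define nn where "nn = real_of_int n"
    have g2: "0 \<le> 2 / g" using g0 by simp
    have nn1: "1 \<le> nn" using nbig g2 unfolding nn_def by linarith
    have Tn: "T \<le> nn" using nbig g2 unfolding nn_def by linarith
    have ng: "2 / g \<le> nn" using nbig unfolding nn_def by linarith
    have nnp: "0 < nn" using nn1 by simp
    have lt: "\<bar>\<rho> - real_of_int m / nn\<bar> < nn powr (- \<mu>)"
      using mn nnp unfolding Tset_def nn_def by auto
    define d where "d = \<bar>\<rho> * nn - real_of_int m\<bar>"
    have d_eq: "d = nn * \<bar>\<rho> - real_of_int m / nn\<bar>"
    proof -
      have "\<rho> * nn - real_of_int m = nn * (\<rho> - real_of_int m / nn)" using nnp by (simp add: field_simps)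
      then show ?thesis unfolding d_def using nnp by (simp add: abs_mult)
    qed
    have pw: "nn * nn powr (- \<mu>) = nn powr (1 - \<mu>)"
      using nnp by (simp add: powr_diff powr_minus_divide divide_inverse)
    have dlt: "d < nn powr (1 - \<mu>)"
    proof -
      have "d < nn * nn powr (- \<mu>)" unfolding d_eq by (rule mult_strict_left_mono[OF lt nnp])
      then show ?thesis using pw by simp
    qed
    have pw1: "nn powr (1 - \<mu>) \<le> 1"
    proof -
      have "nn powr (1 - \<mu>) \<le> nn powr 0" by (rule powr_mono) (use mu1 nn1 in simp_all)
      then show ?thesis using nnp by simp
    qed
    have d1: "d < 1" using dlt pw1 by simp
    have dm: "\<rho> * nn - 1 < real_of_int m" "real_of_int m < \<rho> * nn + 1" using d1 unfolding d_def by linarith+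
    define a where "a = min 2 (g / 2)"
    have a2: "a \<le> 2" "a \<le> g / 2" unfolding a_def by simp_all
    have gn: "1 \<le> g / 2 * nn" using ng g0 by (simp add: field_simps)
    have bk: "a * nn \<le> \<bar>real_of_int (m - 3 * n + 6 * n)\<bar>" "\<bar>real_of_int (m - 3 * n + 6 * n)\<bar> \<le> (\<rho> + 7) * nn"
    proof -
      have e: "real_of_int (m - 3 * n + 6 * n) = real_of_int m + 3 * nn" unfolding nn_def by simp
      have pos: "2 * nn \<le> real_of_int m + 3 * nn" using dm rho0 nn1 by (smt (verit) mult_nonneg_nonneg)
      have an: "a * nn \<le> 2 * nn" using a2 nnp by (simp add: mult_right_mono)
      have ab: "\<bar>real_of_int m + 3 * nn\<bar> = real_of_int m + 3 * nn" using pos nnp by simp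
      show "a * nn \<le> \<bar>real_of_int (m - 3 * n + 6 * n)\<bar>" unfolding e ab using an pos by linarith
      have "real_of_int m + 3 * nn \<le> (\<rho> + 7) * nn" using dm nn1 by (simp add: algebra_simps)
      then show "\<bar>real_of_int (m - 3 * n + 6 * n)\<bar> \<le> (\<rho> + 7) * nn" unfolding e ab .
    qed
    have bk1: "a * nn \<le> \<bar>real_of_int (m - 3 * n)\<bar>" "\<bar>real_of_int (m - 3 * n)\<bar> \<le> (\<rho> + 7) * nn"
    proof -
      have e: "real_of_int (m - 3 * n) = (\<rho> - 3) * nn - (\<rho> * nn - real_of_int m)" unfolding nn_def by (simp add: algebra_simps)
      have ge: "g * nn - d \<le> \<bar>real_of_int (m - 3 * n)\<bar>"
        unfolding e g_def d_def by (simp add: abs_mult[symmetric]; smt (verit) abs_triangle_ineq4)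
      have le: "\<bar>real_of_int (m - 3 * n)\<bar> \<le> g * nn + d"
        unfolding e g_def d_def using abs_triangle_ineq4[of "(\<rho> - 3) * nn" "\<rho> * nn - real_of_int m"] nnp by (simp add: abs_mult)
      have "a * nn \<le> g / 2 * nn" using a2 nnp by (simp add: mult_right_mono)
      also have "\<dots> \<le> g * nn - d" using gn d1 by simp
      finally show "a * nn \<le> \<bar>real_of_int (m - 3 * n)\<bar>" using ge by linarith
      have "g \<le> \<rho> + 3" unfolding g_def using rho0 by simp
      then have "g * nn + d \<le> (\<rho> + 3) * nn + nn" using d1 nn1 by (smt (verit) mult_right_mono nnp)
      then show "\<bar>real_of_int (m - 3 * n)\<bar> \<le> (\<rho> + 7) * nn" using le nn1 by (simp add: algebra_simps)
    qed
    have bk2: "a * nn \<le> \<bar>real_of_int (6 * n)\<bar>" "\<bar>real_of_int (6 * n)\<bar> \<le> (\<rho> + 7) * nn"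
    proof -
      have e: "\<bar>real_of_int (6 * n)\<bar> = 6 * nn" unfolding nn_def using nnp nn_def by simp
      have "a * nn \<le> 2 * nn" using a2 nnp by (simp add: mult_right_mono)
      then show "a * nn \<le> \<bar>real_of_int (6 * n)\<bar>" unfolding e using nnp by linarith
      show "\<bar>real_of_int (6 * n)\<bar> \<le> (\<rho> + 7) * nn" unfolding e using nnp rho0 by (simp add: algebra_simps)
    qed
    have Hid: "\<alpha>1 * (real_of_int (m - 3 * n))^3 + r * \<alpha>1 * (real_of_int (6 * n))^3 - \<alpha>1 * (real_of_int (m - 3 * n + 6 * n))^3
        = 18 * \<alpha>1 * nn * ((\<rho> * nn - real_of_int m) * (\<rho> * nn + real_of_int m))"
    proof -
      have "\<alpha>1 * (real_of_int (m - 3 * n))^3 + r * \<alpha>1 * (real_of_int (6 * n))^3 - \<alpha>1 * (real_of_int (m - 3 * n + 6 * n))^3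
          = 18 * \<alpha>1 * nn * ((12 * r - 3) * nn^2 - (real_of_int m)^2)"
        unfolding nn_def by (simp add: power3_eq_cube power2_eq_square algebra_simps)
      also have "(12 * r - 3) * nn^2 - (real_of_int m)^2 = (\<rho> * nn - real_of_int m) * (\<rho> * nn + real_of_int m)"
        unfolding rho2[symmetric] by (simp add: power2_eq_square algebra_simps)
      finally show ?thesis .
    qed
    have hb: "1 + \<bar>18 * \<alpha>1 * nn * ((\<rho> * nn - real_of_int m) * (\<rho> * nn + real_of_int m))\<bar> \<le> (1 + C) * nn powr (3 - \<mu>)"
    proof -
      have s1: "\<bar>\<rho> * nn + real_of_int m\<bar> \<le> (2 * \<rho> + 1) * nn"
      proof -
        have eq: "\<rho> * nn + real_of_int m = 2 * \<rho> * nn - (\<rho> * nn - real_of_int m)" by simp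
        have a2: "\<bar>2 * \<rho> * nn\<bar> = 2 * \<rho> * nn" using rho0 nnp by simp
        have "\<bar>\<rho> * nn + real_of_int m\<bar> \<le> \<bar>2 * \<rho> * nn\<bar> + \<bar>\<rho> * nn - real_of_int m\<bar>"
          unfolding eq by (rule abs_triangle_ineq4)
        then have "\<bar>\<rho> * nn + real_of_int m\<bar> \<le> 2 * \<rho> * nn + d" unfolding a2 d_def .
        also have "\<dots> \<le> 2 * \<rho> * nn + nn" using d1 nn1 by simp
        finally show ?thesis by (simp add: algebra_simps)
      qed
      have "\<bar>18 * \<alpha>1 * nn * ((\<rho> * nn - real_of_int m) * (\<rho> * nn + real_of_int m))\<bar>
          = 18 * \<bar>\<alpha>1\<bar> * nn * (d * \<bar>\<rho> * nn + real_of_int m\<bar>)"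
        unfolding d_def using nnp by (simp add: abs_mult)
      also have "\<dots> \<le> 18 * \<bar>\<alpha>1\<bar> * nn * (nn powr (1 - \<mu>) * ((2 * \<rho> + 1) * nn))"
      proof -
        have "d * \<bar>\<rho> * nn + real_of_int m\<bar> \<le> nn powr (1 - \<mu>) * ((2 * \<rho> + 1) * nn)"
          by (rule mult_mono[OF dlt[THEN less_imp_le] s1]) (simp_all add: d_def)
        then show ?thesis by (rule mult_left_mono) (use nnp in simp)
      qed
      also have "\<dots> = C * (nn * nn * nn powr (1 - \<mu>))" unfolding C_def by (simp add: mult_ac)
      also have "nn * nn * nn powr (1 - \<mu>) = nn powr (3 - \<mu>)"
      proof -
        have "nn powr (3 - \<mu>) = nn powr (1 + 1 + (1 - \<mu>))" by simp
        also have "\<dots> = nn powr 1 * nn powr 1 * nn powr (1 - \<mu>)" by (simp only: powr_add)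
        finally show ?thesis using nnp by simp
      qed
      finally have hh: "\<bar>18 * \<alpha>1 * nn * ((\<rho> * nn - real_of_int m) * (\<rho> * nn + real_of_int m))\<bar> \<le> C * nn powr (3 - \<mu>)" .
      have "1 \<le> nn powr (3 - \<mu>)" using nn1 mu3 by (simp add: ge_one_powr_ge_zero)
      then show ?thesis using hh by (simp add: algebra_simps)
    qed
    have n0: "6 * n \<noteq> 0" using nnp unfolding nn_def by simp
    show "\<exists>n k1 k2. T \<le> n \<and> 1 \<le> n \<and> k2 \<noteq> 0
       \<and> min 2 (g / 2) * n \<le> \<bar>real_of_int (k1 + k2)\<bar> \<and> \<bar>real_of_int (k1 + k2)\<bar> \<le> (\<rho> + 7) * n
       \<and> min 2 (g / 2) * n \<le> \<bar>real_of_int k1\<bar> \<and> \<bar>real_of_int k1\<bar> \<le> (\<rho> + 7) * n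
       \<and> min 2 (g / 2) * n \<le> \<bar>real_of_int k2\<bar> \<and> \<bar>real_of_int k2\<bar> \<le> (\<rho> + 7) * n
       \<and> 1 + \<bar>\<alpha>1 * (real_of_int k1)^3 + r * \<alpha>1 * (real_of_int k2)^3 - \<alpha>1 * (real_of_int (k1 + k2))^3\<bar> \<le> (1 + C) * n powr (3 - \<mu>)"
      apply (rule exI[of _ nn], rule exI[of _ "m - 3 * n"], rule exI[of _ "6 * n"])
      using Tn nn1 n0 bk[unfolded a_def] bk1[unfolded a_def] bk2[unfolded a_def] hb[folded Hid] by (intro conjI)
  qed
qed

lemma part_d:
  fixes \<alpha>1 \<alpha>2 s b :: real
  assumes a1: "\<alpha>1 \<noteq> 0" and r4: "1/4 \<le> \<alpha>2 / \<alpha>1" and r1: "\<alpha>2 / \<alpha>1 \<noteq> 1" and s: "s < s_r (\<alpha>2 / \<alpha>1)"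
  shows "\<not> (\<exists>C. \<forall>w1 w2. schwartz_TR w1 \<and> schwartz_TR w2 \<and> zero_mode w2 \<longrightarrow> bilin_est \<alpha>1 \<alpha>2 s b C w1 w2)"
proof -
  define r where "r = \<alpha>2 / \<alpha>1"
  have a2: "\<alpha>2 = r * \<alpha>1" unfolding r_def using a1 by simp
  have unb: "\<exists>k1 k2. k2 \<noteq> 0 \<and> M \<le> Rf \<alpha>1 (r * \<alpha>1) s k1 k2" for M
  proof (cases "sqrt (12 * r - 3) \<in> \<rat>")
    case True
    have "s < 1" using s s_r_le1[of r] unfolding r_def by linarith
    then show ?thesis using fam_rat[OF r4[folded r_def] r1[folded r_def] True] by blast
  next
    case False
    obtain \<mu> where "1 < \<mu>" "2 * s + 1 < \<mu>" "\<mu> \<le> 3" "infinite (Tset (sqrt (12 * r - 3)) \<mu>)"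
      using choose_mu[OF False s[folded r_def]] by blast
    then show ?thesis using fam_irr[OF r4[folded r_def] r1[folded r_def]] by blast
  qed
  have "\<not> (\<exists>C. \<forall>w1 w2. schwartz_TR w1 \<and> schwartz_TR w2 \<and> zero_mode w2 \<longrightarrow> bilin_est \<alpha>1 (r * \<alpha>1) s b C w1 w2)"
    by (rule noC[where Zk="\<lambda>k1 k2. k2 \<noteq> 0" and Q="\<lambda>w1 w2. schwartz_TR w1 \<and> schwartz_TR w2 \<and> zero_mode w2"])
       (use unb in auto)
  then show ?thesis unfolding a2[symmetric] .
qed

theorem proposition4p2:
  fixes \<alpha>1 \<alpha>2 :: real
  assumes "\<alpha>1 \<noteq> 0" and "\<alpha>2 \<noteq> 0"
  shows
   "(\<forall>b s. \<alpha>2 / \<alpha>1 < 1/4 \<and> s < -1/2 \<longrightarrow>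
       \<not> (\<exists>C. \<forall>w1 w2. schwartz_TR w1 \<and> schwartz_TR w2 \<and> zero_mode w2 \<longrightarrow> bilin_est \<alpha>1 \<alpha>2 s b C w1 w2))
    \<and> (\<forall>b s. \<alpha>2 / \<alpha>1 = 1 \<and> s < -1/2 \<longrightarrow>
       \<not> (\<exists>C. \<forall>w1 w2. schwartz_TR w1 \<and> schwartz_TR w2 \<and> zero_mode w1 \<and> zero_mode w2 \<longrightarrow> bilin_est \<alpha>1 \<alpha>2 s b C w1 w2))
    \<and> (\<forall>b s. \<alpha>2 / \<alpha>1 = 1 \<longrightarrow>
       \<not> (\<exists>C. \<forall>w1 w2. schwartz_TR w1 \<and> schwartz_TR w2 \<and> zero_mode w2 \<longrightarrow> bilin_est \<alpha>1 \<alpha>2 s b C w1 w2))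
    \<and> (\<forall>b s. 1/4 \<le> \<alpha>2 / \<alpha>1 \<and> \<alpha>2 / \<alpha>1 \<noteq> 1 \<and> s < s_r (\<alpha>2 / \<alpha>1) \<longrightarrow>
       \<not> (\<exists>C. \<forall>w1 w2. schwartz_TR w1 \<and> schwartz_TR w2 \<and> zero_mode w2 \<longrightarrow> bilin_est \<alpha>1 \<alpha>2 s b C w1 w2))
    \<and> (\<forall>b s. \<not> (\<exists>C. \<forall>w1 w2. schwartz_TR w1 \<and> schwartz_TR w2 \<longrightarrow> bilin_est \<alpha>1 \<alpha>2 s b C w1 w2))"
proof (intro conjI allI impI)
  fix b s :: real
  assume "\<alpha>2 / \<alpha>1 < 1/4 \<and> s < -1/2"
  then show "\<not> (\<exists>C. \<forall>w1 w2. schwartz_TR w1 \<and> schwartz_TR w2 \<and> zero_mode w2 \<longrightarrow> bilin_est \<alpha>1 \<alpha>2 s b C w1 w2)"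
    using part_a by blast
next
  fix b s :: real
  assume h: "\<alpha>2 / \<alpha>1 = 1 \<and> s < -1/2"
  then have e: "\<alpha>2 = \<alpha>1" using assms(1) by (simp add: divide_eq_1_iff)
  show "\<not> (\<exists>C. \<forall>w1 w2. schwartz_TR w1 \<and> schwartz_TR w2 \<and> zero_mode w1 \<and> zero_mode w2 \<longrightarrow> bilin_est \<alpha>1 \<alpha>2 s b C w1 w2)"
    unfolding e using part_b h by blast
next
  fix b s :: real
  assume h: "\<alpha>2 / \<alpha>1 = 1"
  then have e: "\<alpha>2 = \<alpha>1" using assms(1) by (simp add: divide_eq_1_iff)
  show "\<not> (\<exists>C. \<forall>w1 w2. schwartz_TR w1 \<and> schwartz_TR w2 \<and> zero_mode w2 \<longrightarrow> bilin_est \<alpha>1 \<alpha>2 s b C w1 w2)"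
    unfolding e by (rule part_c)
next
  fix b s :: real
  assume h: "1/4 \<le> \<alpha>2 / \<alpha>1 \<and> \<alpha>2 / \<alpha>1 \<noteq> 1 \<and> s < s_r (\<alpha>2 / \<alpha>1)"
  then show "\<not> (\<exists>C. \<forall>w1 w2. schwartz_TR w1 \<and> schwartz_TR w2 \<and> zero_mode w2 \<longrightarrow> bilin_est \<alpha>1 \<alpha>2 s b C w1 w2)"
    using part_d[OF assms(1)] by blast
next
  fix b s :: real
  show "\<not> (\<exists>C. \<forall>w1 w2. schwartz_TR w1 \<and> schwartz_TR w2 \<longrightarrow> bilin_est \<alpha>1 \<alpha>2 s b C w1 w2)"
    by (rule part_e)
qed

end
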